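(* For any atomic proposition $p$, there exists an adequate $p$-removing mapping $\mathsf{re}_p:\mathcal P\times\mathcal P\to\mathcal P$.
   Context: Formulas are built from $\bot$ and atoms by $\to$ and $\Box$; sequents $\Gamma\Rightarrow\Delta$ have finite multisets of formulas on each side; $\Box\Pi$ denotes $\{\Box B:B\in\Pi\}$. The calculus $\mathsf{Grz}_\infty+\mathsf{cut}$ has initial sequents $\Gamma,p\Rightarrow p,\Delta$ ($p$ atomic), $\Gamma,\bot\Rightarrow\Delta$, and rules $(\to_L)$ from $\Gamma,B\Rightarrow\Delta$ and $\Gamma\Rightarrow A,\Delta$ infer $\Gamma,A\to B\Rightarrow\Delta$; $(\to_R)$ from $\Gamma,A\Rightarrow B,\Delta$ infer $\Gamma\Rightarrow A\to B,\Delta$; $(\mathsf{refl})$ from $\Gamma,B,\Box B\Rightarrow\Delta$ infer $\Gamma,\Box B\Rightarrow\Delta$; $(\Box)$ from left premise $\Gamma,\Box\Pi\Rightarrow A,\Delta$ and right premise $\Box\Pi\Rightarrow A$ infer $\Gamma,\Box\Pi\Rightarrow\Box A,\Delta$; $(\mathsf{cut})$ from $\Gamma\Rightarrow A,\Delta$ and $\Gamma,A\Rightarrow\Delta$ infer $\Gamma\Rightarrow\Delta$. An $\infty$-proof is a possibly infinite tree of sequents built by these rules with leaves labelled by initial sequents, in which every infinite branch passes through a right premise of $(\Box)$ infinitely often; $\mathcal P$ is the set of all $\infty$-proofs. The $n$-fragment of an $\infty$-proof is the finite tree obtained by cutting every branch at the $n$-th (from the root) right premise of $(\Box)$. Write $\pi\sim_n\tau$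 if the $n$-fragments of $\pi,\tau$ coincide, and $\pi\sim_0\tau$ always. $\mathcal P_n$ is the set of $\infty$-proofs with no application of $(\mathsf{cut})$ in their $n$-fragment, and $\mathcal P_0=\mathcal P$. A pair $(\pi,\tau)$ is a cut pair with cut formula $A$ and cut result $\Gamma\Rightarrow\Delta$ if $\pi$ is an $\infty$-proof of $\Gamma\Rightarrow\Delta,A$ and $\tau$ is an $\infty$-proof of $A,\Gamma\Rightarrow\Delta$. A mapping $\mathsf u:\mathcal P\times\mathcal P\to\mathcal P$ is $A$-removing if it is non-expansive (i.e. $\pi\sim_n\pi'$ and $\tau\sim_n\tau'$ imply $\mathsf u(\pi,\tau)\sim_n\mathsf u(\pi',\tau')$ for all $n$) and maps every cut pair with cut formula $A$ to an $\infty$-proof of its cut result. It is adequate if for every $n\in\mathbb N$, $\pi,\tau\in\mathcal P_n$ implies $\mathsf u(\pi,\tau)\in\mathcal P_n$. *)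

theory Defs
  imports Main "HOL-Library.Multiset"
begin

datatype 'a fm = FBot | FAt 'a | FImp "'a fm" "'a fm" | FBox "'a fm"

type_synonym 'a seq = "'a fm multiset \<times> 'a fm multiset"

datatype rl = RAx | RBotL | RImpL | RImpR | RRefl | RBox | RCut

fun arity :: "rl \<Rightarrow> nat" where
  "arity RAx = 0" | "arity RBotL = 0" | "arity RImpL = 2" | "arity RImpR = 1"
| "arity RRefl = 1" | "arity RBox = 2" | "arity RCut = 2"

text \<open>A possibly infinite tree: a partial labelling of positions (lists of child indices)
  by a sequent and the rule applied at that node. Child i of position xs is xs @ [i].
  For binary rules, child 0 is the left premise and child 1 the right premise.\<close>
type_synonym 'a ptree = "nat list \<Rightarrow> ('a seq \<times> rl) option"

definition seq_at :: "'a ptree \<Rightarrow> nat list \<Rightarrow> 'a seq" where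
  "seq_at T xs = fst (the (T xs))"

definition rule_at :: "'a ptree \<Rightarrow> nat list \<Rightarrow> rl" where
  "rule_at T xs = snd (the (T xs))"

definition wf_tree :: "'a ptree \<Rightarrow> bool" where
  "wf_tree T \<longleftrightarrow> T [] \<noteq> None \<and>
     (\<forall>xs i. T (xs @ [i]) \<noteq> None \<longleftrightarrow> (T xs \<noteq> None \<and> i < arity (rule_at T xs)))"

definition local_ok :: "'a ptree \<Rightarrow> nat list \<Rightarrow> bool" where
  "local_ok T xs \<longleftrightarrow>
    (let S = seq_at T xs; c0 = seq_at T (xs @ [0]); c1 = seq_at T (xs @ [1]) in
     case rule_at T xs of
       RAx \<Rightarrow> (\<exists>p. FAt p \<in># fst S \<and> FAt p \<in># snd S)
     | RBotL \<Rightarrow> FBot \<in># fst S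
     | RImpL \<Rightarrow> (\<exists>\<Gamma> \<Delta> A B. S = (add_mset (FImp A B) \<Gamma>, \<Delta>) \<and>
                  c0 = (add_mset B \<Gamma>, \<Delta>) \<and> c1 = (\<Gamma>, add_mset A \<Delta>))
     | RImpR \<Rightarrow> (\<exists>\<Gamma> \<Delta> A B. S = (\<Gamma>, add_mset (FImp A B) \<Delta>) \<and>
                  c0 = (add_mset A \<Gamma>, add_mset B \<Delta>))
     | RRefl \<Rightarrow> (\<exists>\<Gamma> \<Delta> B. S = (add_mset (FBox B) \<Gamma>, \<Delta>) \<and>
                  c0 = (add_mset B (add_mset (FBox B) \<Gamma>), \<Delta>))
     | RBox \<Rightarrow> (\<exists>\<Gamma> \<Pi> \<Delta> A. S = (\<Gamma> + image_mset FBox \<Pi>, add_mset (FBox A) \<Delta>) \<and>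
                  c0 = (\<Gamma> + image_mset FBox \<Pi>, add_mset A \<Delta>) \<and>
                  c1 = (image_mset FBox \<Pi>, {#A#}))
     | RCut \<Rightarrow> (\<exists>A. c0 = (fst S, add_mset A (snd S)) \<and> c1 = (add_mset A (fst S), snd S)))"

definition right_box_prem :: "'a ptree \<Rightarrow> nat list \<Rightarrow> bool" where
  "right_box_prem T ys \<longleftrightarrow> ys \<noteq> [] \<and> last ys = 1 \<and> T (butlast ys) \<noteq> None
     \<and> rule_at T (butlast ys) = RBox"

definition box_count :: "'a ptree \<Rightarrow> nat list \<Rightarrow> nat" where
  "box_count T xs = card {k. 1 \<le> k \<and> k \<le> length xs \<and> right_box_prem T (take k xs)}"

definition is_inf_proof :: "'a ptree \<Rightarrow> bool" where
  "is_inf_proof T \<longleftrightarrow> wf_tree T \<and> (\<forall>xs. T xs \<noteq> None \<longrightarrow> local_ok T xs) \<and>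
     (\<forall>f :: nat \<Rightarrow> nat. (\<forall>k. T (map f [0..<k]) \<noteq> None) \<longrightarrow>
        infinite {k. right_box_prem T (map f [0..<Suc k])})"

definition PP :: "'a ptree set" where
  "PP = {T. is_inf_proof T}"

definition concl :: "'a ptree \<Rightarrow> 'a seq" where
  "concl T = seq_at T []"

text \<open>The n-fragment: nodes all of whose proper ancestors lie strictly below the n-th
  right premise of (box); at nodes that are themselves the n-th such premise only the
  sequent is kept (the branch is cut there).\<close>
definition fragment :: "nat \<Rightarrow> 'a ptree \<Rightarrow> nat list \<Rightarrow> ('a seq \<times> rl option) option" where
  "fragment n T xs =
     (if T xs \<noteq> None \<and> (\<forall>k < length xs. box_count T (take k xs) < n)
      then Some (seq_at T xs, if box_count T xs < n then Some (rule_at T xs) else None)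
      else None)"

definition sim :: "nat \<Rightarrow> 'a ptree \<Rightarrow> 'a ptree \<Rightarrow> bool" where
  "sim n T T' \<longleftrightarrow> n = 0 \<or> fragment n T = fragment n T'"

definition PPn :: "nat \<Rightarrow> 'a ptree set" where
  "PPn n = {T \<in> PP. \<forall>xs. fragment n T xs \<noteq> None \<longrightarrow> box_count T xs < n \<longrightarrow> rule_at T xs \<noteq> RCut}"

definition maps_into_PP :: "('a ptree \<Rightarrow> 'a ptree \<Rightarrow> 'a ptree) \<Rightarrow> bool" where
  "maps_into_PP u \<longleftrightarrow> (\<forall>\<pi> \<in> PP. \<forall>\<tau> \<in> PP. u \<pi> \<tau> \<in> PP)"

definition non_expansive :: "('a ptree \<Rightarrow> 'a ptree \<Rightarrow> 'a ptree) \<Rightarrow> bool" where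
  "non_expansive u \<longleftrightarrow> (\<forall>n. \<forall>\<pi>\<in>PP. \<forall>\<pi>'\<in>PP. \<forall>\<tau>\<in>PP. \<forall>\<tau>'\<in>PP.
      sim n \<pi> \<pi>' \<longrightarrow> sim n \<tau> \<tau>' \<longrightarrow> sim n (u \<pi> \<tau>) (u \<pi>' \<tau>'))"

definition cut_pair :: "'a fm \<Rightarrow> 'a ptree \<Rightarrow> 'a ptree \<Rightarrow> 'a seq \<Rightarrow> bool" where
  "cut_pair A \<pi> \<tau> S \<longleftrightarrow> \<pi> \<in> PP \<and> \<tau> \<in> PP \<and>
     concl \<pi> = (fst S, add_mset A (snd S)) \<and> concl \<tau> = (add_mset A (fst S), snd S)"

definition removing :: "'a fm \<Rightarrow> ('a ptree \<Rightarrow> 'a ptree \<Rightarrow> 'a ptree) \<Rightarrow> bool" where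
  "removing A u \<longleftrightarrow> maps_into_PP u \<and> non_expansive u \<and>
     (\<forall>\<pi> \<tau> S. cut_pair A \<pi> \<tau> S \<longrightarrow> u \<pi> \<tau> \<in> PP \<and> concl (u \<pi> \<tau>) = S)"

definition adequate :: "('a ptree \<Rightarrow> 'a ptree \<Rightarrow> 'a ptree) \<Rightarrow> bool" where
  "adequate u \<longleftrightarrow> (\<forall>n. \<forall>\<pi> \<tau>. \<pi> \<in> PPn n \<longrightarrow> \<tau> \<in> PPn n \<longrightarrow> u \<pi> \<tau> \<in> PPn n)"

end

theory Submission
  imports Defs
begin

inductive der :: "('a seq \<times> 'b) set \<Rightarrow> bool \<Rightarrow> 'a seq \<Rightarrow> bool" for X c where
  ax: "FAt q \<in># \<Gamma> \<Longrightarrow> FAt q \<in># \<Delta> \<Longrightarrow> der X c (\<Gamma>, \<Delta>)"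
| bot: "FBot \<in># \<Gamma> \<Longrightarrow> der X c (\<Gamma>, \<Delta>)"
| impL: "der X c (add_mset B \<Gamma>, \<Delta>) \<Longrightarrow> der X c (\<Gamma>, add_mset A \<Delta>) \<Longrightarrow> der X c (add_mset (FImp A B) \<Gamma>, \<Delta>)"
| impR: "der X c (add_mset A \<Gamma>, add_mset B \<Delta>) \<Longrightarrow> der X c (\<Gamma>, add_mset (FImp A B) \<Delta>)"
| refl: "der X c (add_mset B (add_mset (FBox B) \<Gamma>), \<Delta>) \<Longrightarrow> der X c (add_mset (FBox B) \<Gamma>, \<Delta>)"
| box: "der X c (\<Gamma> + image_mset FBox \<Pi>, add_mset A \<Delta>) \<Longrightarrow> ((image_mset FBox \<Pi>, {#A#}), b) \<in> X
        \<Longrightarrow> der X c (\<Gamma> + image_mset FBox \<Pi>, add_mset (FBox A) \<Delta>)"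
| cut: "\<not> c \<Longrightarrow> der X c (\<Gamma>, add_mset A \<Delta>) \<Longrightarrow> der X c (add_mset A \<Gamma>, \<Delta>) \<Longrightarrow> der X c (\<Gamma>, \<Delta>)"

lemma der_weak: "der X c S \<Longrightarrow> der X c (fst S + G, snd S + H)"
proof (induction rule: der.induct)
  case (ax q \<Gamma> \<Delta>) then show ?case by (auto intro: der.ax)
next
  case (bot \<Gamma> \<Delta>) then show ?case by (auto intro: der.bot)
next
  case (impL B \<Gamma> \<Delta> A) then show ?case using der.impL[of X c B "\<Gamma>+G" "\<Delta>+H" A] by simp
next
  case (impR A \<Gamma> B \<Delta>) then show ?case using der.impR[of X c A "\<Gamma>+G" B "\<Delta>+H"] by simp
next
  case (refl B \<Gamma> \<Delta>) then show ?case using der.refl[of X c B "\<Gamma>+G" "\<Delta>+H"] by simp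
next
  case (box \<Gamma> \<Pi> A \<Delta> b) then show ?case using der.box[of X c "\<Gamma>+G" \<Pi> A "\<Delta>+H" b]
    by (simp add: ac_simps)
next
  case (cut \<Gamma> A \<Delta>) then show ?case using der.cut[where X=X and c=c and \<Gamma>="\<Gamma>+G" and \<Delta>="\<Delta>+H" and A=A] by simp
qed

lemma der_weakL: "der X c (\<Gamma>, \<Delta>) \<Longrightarrow> der X c (add_mset B \<Gamma>, \<Delta>)"
  using der_weak[of X c "(\<Gamma>, \<Delta>)" "{#B#}" "{#}"] by simp

lemma der_weakR: "der X c (\<Gamma>, \<Delta>) \<Longrightarrow> der X c (\<Gamma>, add_mset B \<Delta>)"
  using der_weak[of X c "(\<Gamma>, \<Delta>)" "{#}" "{#B#}"] by simp

lemma mset_add_split: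
  assumes "add_mset a M = add_mset b N"
  obtains "a = b" "M = N" | K where "M = add_mset b K" "N = add_mset a K" "a \<noteq> b"
  using assms by (metis add_eq_conv_ex)

lemma inv_impL: "der X c S \<Longrightarrow> fst S = add_mset (FImp A B) \<Gamma> \<Longrightarrow>
   der X c (add_mset B \<Gamma>, snd S) \<and> der X c (\<Gamma>, add_mset A (snd S))"
proof (induction arbitrary: \<Gamma> rule: der.induct)
  case (ax q \<Gamma>' \<Delta>)
  then have "FAt q \<in># \<Gamma>" by auto
  then show ?case using ax by (auto intro: der.ax)
next
  case (bot \<Gamma>' \<Delta>)
  then have "FBot \<in># \<Gamma>" by auto
  then show ?case by (auto intro: der.bot)
next
  case (impL B' \<Gamma>' \<Delta> A')
  from impL.prems have e: "add_mset (FImp A' B') \<Gamma>' = add_mset (FImp A B) \<Gamma>" by simp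
  show ?case
  proof (cases rule: mset_add_split[OF e])
    case 1 then show ?thesis using impL by simp
  next
    case (2 K)
    have i1: "der X c (add_mset B (add_mset B' K), \<Delta>) \<and> der X c (add_mset B' K, add_mset A \<Delta>)"
      using impL.IH(1)[of "add_mset B' K"] 2 by (simp add: add_mset_commute)
    have i2: "der X c (add_mset B K, add_mset A' \<Delta>) \<and> der X c (K, add_mset A (add_mset A' \<Delta>))"
      using impL.IH(2)[of K] 2 by simp
    have g1: "der X c (add_mset B (add_mset (FImp A' B') K), \<Delta>)"
      using der.impL[of X c B' "add_mset B K" \<Delta> A'] i1 i2 by (simp add: add_mset_commute)
    have g2: "der X c (add_mset (FImp A' B') K, add_mset A \<Delta>)"
      using der.impL[of X c B' K "add_mset A \<Delta>" A'] i1 i2 by (simp add: add_mset_commute)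
    show ?thesis using g1 g2 2 by simp
  qed
next
  case (impR A' \<Gamma>' B' \<Delta>)
  have i: "der X c (add_mset B (add_mset A' \<Gamma>), add_mset B' \<Delta>) \<and> der X c (add_mset A' \<Gamma>, add_mset A (add_mset B' \<Delta>))"
    using impR.IH[of "add_mset A' \<Gamma>"] impR.prems by (simp add: add_mset_commute)
  have g1: "der X c (add_mset B \<Gamma>, add_mset (FImp A' B') \<Delta>)"
    using der.impR[of X c A' "add_mset B \<Gamma>" B' \<Delta>] i by (simp add: add_mset_commute)
  have g2: "der X c (\<Gamma>, add_mset A (add_mset (FImp A' B') \<Delta>))"
    using der.impR[of X c A' \<Gamma> B' "add_mset A \<Delta>"] i by (simp add: add_mset_commute)
  show ?case using g1 g2 by simp
next
  case (refl B' \<Gamma>' \<Delta>)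
  from refl.prems have e: "add_mset (FBox B') \<Gamma>' = add_mset (FImp A B) \<Gamma>" by simp
  obtain K where K: "\<Gamma>' = add_mset (FImp A B) K" "\<Gamma> = add_mset (FBox B') K"
    using mset_add_split[OF e] by blast
  have i: "der X c (add_mset B (add_mset B' (add_mset (FBox B') K)), \<Delta>) \<and> der X c (add_mset B' (add_mset (FBox B') K), add_mset A \<Delta>)"
    using refl.IH[of "add_mset B' (add_mset (FBox B') K)"] K by (simp add: add_mset_commute)
  have g1: "der X c (add_mset B \<Gamma>, \<Delta>)"
    using der.refl[of X c B' "add_mset B K" \<Delta>] i K by (simp add: add_mset_commute)
  have g2: "der X c (\<Gamma>, add_mset A \<Delta>)"
    using der.refl[of X c B' K "add_mset A \<Delta>"] i K by (simp add: add_mset_commute)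
  show ?case using g1 g2 by simp
next
  case (box \<Gamma>' \<Pi> A' \<Delta> b)
  from box.prems have e: "\<Gamma>' + image_mset FBox \<Pi> = add_mset (FImp A B) \<Gamma>" by simp
  then have "FImp A B \<in># \<Gamma>'" by (metis image_iff multiset.set_map fm.distinct(11) union_iff union_single_eq_member)
  then obtain K where K: "\<Gamma>' = add_mset (FImp A B) K" by (metis multi_member_split)
  with e have G: "\<Gamma> = K + image_mset FBox \<Pi>" by simp
  have i: "der X c (add_mset B (K + image_mset FBox \<Pi>), add_mset A' \<Delta>) \<and> der X c (K + image_mset FBox \<Pi>, add_mset A (add_mset A' \<Delta>))"
    using box.IH[of "K + image_mset FBox \<Pi>"] K by simp
  have g1: "der X c (add_mset B \<Gamma>, add_mset (FBox A') \<Delta>)"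
    using der.box[of X c "add_mset B K" \<Pi> A' \<Delta> b] i G box.hyps by simp
  have g2: "der X c (\<Gamma>, add_mset A (add_mset (FBox A') \<Delta>))"
    using der.box[of X c K \<Pi> A' "add_mset A \<Delta>" b] i G box.hyps by (simp add: add_mset_commute)
  show ?case using g1 g2 by simp
next
  case (cut \<Gamma>' A' \<Delta>)
  have i1: "der X c (add_mset B \<Gamma>, add_mset A' \<Delta>) \<and> der X c (\<Gamma>, add_mset A (add_mset A' \<Delta>))"
    using cut.IH(1)[of \<Gamma>] cut.prems by simp
  have i2: "der X c (add_mset A' (add_mset B \<Gamma>), \<Delta>) \<and> der X c (add_mset A' \<Gamma>, add_mset A \<Delta>)"
    using cut.IH(2)[of "add_mset A' \<Gamma>"] cut.prems by (simp add: add_mset_commute)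
  have g1: "der X c (add_mset B \<Gamma>, \<Delta>)"
    using der.cut[where X=X and c=c and \<Gamma>="add_mset B \<Gamma>" and A=A' and \<Delta>=\<Delta>] i1 i2 cut.hyps by simp
  have g2: "der X c (\<Gamma>, add_mset A \<Delta>)"
    using der.cut[where X=X and c=c and \<Gamma>="\<Gamma>" and A=A' and \<Delta>="add_mset A \<Delta>"] i1 i2 cut.hyps by (simp add: add_mset_commute)
  show ?case using g1 g2 by simp
qed

lemma inv_impR: "der X c S \<Longrightarrow> snd S = add_mset (FImp A B) \<Delta> \<Longrightarrow>
   der X c (add_mset A (fst S), add_mset B \<Delta>)"
proof (induction arbitrary: \<Delta> rule: der.induct)
  case (ax q \<Gamma> \<Delta>')
  then have "FAt q \<in># \<Delta>" by auto
  then show ?case using ax by (auto intro: der.ax)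
next
  case (bot \<Gamma>' \<Delta>)
  then show ?case by (auto intro: der.bot)
next
  case (impL B' \<Gamma>' \<Delta>' A')
  have i1: "der X c (add_mset A (add_mset B' \<Gamma>'), add_mset B \<Delta>)" using impL by simp
  have i2: "der X c (add_mset A \<Gamma>', add_mset B (add_mset A' \<Delta>))"
    using impL.IH(2)[of "add_mset A' \<Delta>"] impL.prems by (simp add: add_mset_commute)
  show ?case using der.impL[of X c B' "add_mset A \<Gamma>'" "add_mset B \<Delta>" A'] i1 i2
    by (simp add: add_mset_commute)
next
  case (impR A' \<Gamma>' B' \<Delta>')
  from impR.prems have e: "add_mset (FImp A' B') \<Delta>' = add_mset (FImp A B) \<Delta>" by simp
  show ?case
  proof (cases rule: mset_add_split[OF e])
    case 1 then show ?thesis using impR by simp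
  next
    case (2 K)
    have i: "der X c (add_mset A (add_mset A' \<Gamma>'), add_mset B (add_mset B' K))"
      using impR.IH[of "add_mset B' K"] 2 by (simp add: add_mset_commute)
    show ?thesis using der.impR[of X c A' "add_mset A \<Gamma>'" B' "add_mset B K"] i 2
      by (simp add: add_mset_commute)
  qed
next
  case (refl B' \<Gamma>' \<Delta>')
  have i: "der X c (add_mset A (add_mset B' (add_mset (FBox B') \<Gamma>')), add_mset B \<Delta>)" using refl by simp
  show ?case using der.refl[of X c B' "add_mset A \<Gamma>'" "add_mset B \<Delta>"] i
    by (simp add: add_mset_commute)
next
  case (box \<Gamma>' \<Pi> A' \<Delta>' b)
  from box.prems have e: "add_mset (FBox A') \<Delta>' = add_mset (FImp A B) \<Delta>" by simp
  obtain K where K: "\<Delta>' = add_mset (FImp A B) K" "\<Delta> = add_mset (FBox A') K"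
    using mset_add_split[OF e] by blast
  have i: "der X c (add_mset A (\<Gamma>' + image_mset FBox \<Pi>), add_mset B (add_mset A' K))"
    using box.IH[of "add_mset A' K"] K by (simp add: add_mset_commute)
  show ?case using der.box[of X c "add_mset A \<Gamma>'" \<Pi> A' "add_mset B K" b] i K box.hyps
    by (simp add: add_mset_commute)
next
  case (cut \<Gamma>' A' \<Delta>')
  have i1: "der X c (add_mset A \<Gamma>', add_mset B (add_mset A' \<Delta>))"
    using cut.IH(1)[of "add_mset A' \<Delta>"] cut.prems by (simp add: add_mset_commute)
  have i2: "der X c (add_mset A (add_mset A' \<Gamma>'), add_mset B \<Delta>)"
    using cut.IH(2)[of \<Delta>] cut.prems by (simp add: add_mset_commute)
  show ?case
    using der.cut[where X=X and c=c and \<Gamma>="add_mset A \<Gamma>'" and A=A' and \<Delta>="add_mset B \<Delta>"] i1 i2 cut.hyps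
    by (simp add: add_mset_commute)
qed

lemma inv_box: "der X c S \<Longrightarrow> snd S = add_mset (FBox A) \<Delta> \<Longrightarrow>
   der X c (fst S, add_mset A \<Delta>)"
proof (induction arbitrary: \<Delta> rule: der.induct)
  case (ax q \<Gamma> \<Delta>')
  then have "FAt q \<in># \<Delta>" by auto
  then show ?case using ax by (auto intro: der.ax)
next
  case (bot \<Gamma>' \<Delta>)
  then show ?case by (auto intro: der.bot)
next
  case (impL B' \<Gamma>' \<Delta>' A')
  have i1: "der X c (add_mset B' \<Gamma>', add_mset A \<Delta>)" using impL by simp
  have i2: "der X c (\<Gamma>', add_mset A (add_mset A' \<Delta>))"
    using impL.IH(2)[of "add_mset A' \<Delta>"] impL.prems by (simp add: add_mset_commute)
  show ?case using der.impL[of X c B' "\<Gamma>'" "add_mset A \<Delta>" A'] i1 i2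
    by (simp add: add_mset_commute)
next
  case (impR A' \<Gamma>' B' \<Delta>')
  from impR.prems have e: "add_mset (FImp A' B') \<Delta>' = add_mset (FBox A) \<Delta>" by simp
  obtain K where K: "\<Delta>' = add_mset (FBox A) K" "\<Delta> = add_mset (FImp A' B') K"
    using mset_add_split[OF e] by blast
  have i: "der X c (add_mset A' \<Gamma>', add_mset A (add_mset B' K))"
    using impR.IH[of "add_mset B' K"] K by (simp add: add_mset_commute)
  show ?case using der.impR[of X c A' "\<Gamma>'" B' "add_mset A K"] i K
    by (simp add: add_mset_commute)
next
  case (refl B' \<Gamma>' \<Delta>')
  have i: "der X c (add_mset B' (add_mset (FBox B') \<Gamma>'), add_mset A \<Delta>)" using refl by simp
  show ?case using der.refl[of X c B' "\<Gamma>'" "add_mset A \<Delta>"] i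
    by (simp add: add_mset_commute)
next
  case (box \<Gamma>' \<Pi> A' \<Delta>' b)
  from box.prems have e: "add_mset (FBox A') \<Delta>' = add_mset (FBox A) \<Delta>" by simp
  show ?case
  proof (cases rule: mset_add_split[OF e])
    case 1 then show ?thesis using box by simp
  next
    case (2 K)
    have i: "der X c (\<Gamma>' + image_mset FBox \<Pi>, add_mset A (add_mset A' K))"
      using box.IH[of "add_mset A' K"] 2 by (simp add: add_mset_commute)
    show ?thesis using der.box[of X c "\<Gamma>'" \<Pi> A' "add_mset A K" b] i 2 box.hyps
      by (simp add: add_mset_commute)
  qed
next
  case (cut \<Gamma>' A' \<Delta>')
  have i1: "der X c (\<Gamma>', add_mset A (add_mset A' \<Delta>))"
    using cut.IH(1)[of "add_mset A' \<Delta>"] cut.prems by (simp add: add_mset_commute)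
  have i2: "der X c (add_mset A' \<Gamma>', add_mset A \<Delta>)"
    using cut.IH(2)[of \<Delta>] cut.prems by (simp add: add_mset_commute)
  show ?case
    using der.cut[where X=X and c=c and \<Gamma>="\<Gamma>'" and A=A' and \<Delta>="add_mset A \<Delta>"] i1 i2 cut.hyps
    by (simp add: add_mset_commute)
qed

lemma mset_add2_split:
  assumes "add_mset x D' = add_mset a (add_mset a D)" "x \<noteq> a"
  shows "\<exists>K. D' = add_mset a (add_mset a K) \<and> D = add_mset x K"
proof -
  have "x \<in># add_mset a (add_mset a D)" using assms(1) by (metis union_single_eq_member)
  then have "x \<in># D" using assms(2) by simp
  then obtain K where K: "D = add_mset x K" by (metis multi_member_split)
  then have "D' = add_mset a (add_mset a K)" using assms by (simp add: add_mset_commute)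
  then show ?thesis using K by blast
qed

lemma contr_at: "der X c S \<Longrightarrow> snd S = add_mset (FAt q) (add_mset (FAt q) \<Delta>) \<Longrightarrow>
   der X c (fst S, add_mset (FAt q) \<Delta>)"
proof (induction arbitrary: \<Delta> rule: der.induct)
  case (ax r \<Gamma> \<Delta>')
  then have "FAt r \<in># add_mset (FAt q) \<Delta>" by auto
  then show ?case using ax by (auto intro: der.ax)
next
  case (bot \<Gamma>' \<Delta>)
  then show ?case by (auto intro: der.bot)
next
  case (impL B' \<Gamma>' \<Delta>' A')
  have i1: "der X c (add_mset B' \<Gamma>', add_mset (FAt q) \<Delta>)" using impL by simp
  have i2: "der X c (\<Gamma>', add_mset (FAt q) (add_mset A' \<Delta>))"
    using impL.IH(2)[of "add_mset A' \<Delta>"] impL.prems by (simp add: add_mset_commute)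
  show ?case using der.impL[of X c B' "\<Gamma>'" "add_mset (FAt q) \<Delta>" A'] i1 i2
    by (simp add: add_mset_commute)
next
  case (impR A' \<Gamma>' B' \<Delta>')
  from impR.prems have e: "add_mset (FImp A' B') \<Delta>' = add_mset (FAt q) (add_mset (FAt q) \<Delta>)" by simp
  obtain K where K: "\<Delta>' = add_mset (FAt q) (add_mset (FAt q) K)" "\<Delta> = add_mset (FImp A' B') K"
    using mset_add2_split[OF e] by auto
  have i: "der X c (add_mset A' \<Gamma>', add_mset (FAt q) (add_mset B' K))"
    using impR.IH[of "add_mset B' K"] K by (simp add: add_mset_commute)
  show ?case using der.impR[of X c A' "\<Gamma>'" B' "add_mset (FAt q) K"] i K
    by (simp add: add_mset_commute)
next
  case (refl B' \<Gamma>' \<Delta>')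
  have i: "der X c (add_mset B' (add_mset (FBox B') \<Gamma>'), add_mset (FAt q) \<Delta>)" using refl by simp
  show ?case using der.refl[of X c B' "\<Gamma>'" "add_mset (FAt q) \<Delta>"] i
    by (simp add: add_mset_commute)
next
  case (box \<Gamma>' \<Pi> A' \<Delta>' b)
  from box.prems have e: "add_mset (FBox A') \<Delta>' = add_mset (FAt q) (add_mset (FAt q) \<Delta>)" by simp
  obtain K where K: "\<Delta>' = add_mset (FAt q) (add_mset (FAt q) K)" "\<Delta> = add_mset (FBox A') K"
    using mset_add2_split[OF e] by auto
  have i: "der X c (\<Gamma>' + image_mset FBox \<Pi>, add_mset (FAt q) (add_mset A' K))"
    using box.IH[of "add_mset A' K"] K by (simp add: add_mset_commute)
  show ?case using der.box[of X c "\<Gamma>'" \<Pi> A' "add_mset (FAt q) K" b] i K box.hyps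
    by (simp add: add_mset_commute)
next
  case (cut \<Gamma>' A' \<Delta>')
  have i1: "der X c (\<Gamma>', add_mset (FAt q) (add_mset A' \<Delta>))"
    using cut.IH(1)[of "add_mset A' \<Delta>"] cut.prems by (simp add: add_mset_commute)
  have i2: "der X c (add_mset A' \<Gamma>', add_mset (FAt q) \<Delta>)"
    using cut.IH(2)[of \<Delta>] cut.prems by (simp add: add_mset_commute)
  show ?case
    using der.cut[where X=X and c=c and \<Gamma>="\<Gamma>'" and A=A' and \<Delta>="add_mset (FAt q) \<Delta>"] i1 i2 cut.hyps
    by (simp add: add_mset_commute)
qed

lemma atcut: "der X c S \<Longrightarrow> fst S = add_mset (FAt p) \<Gamma> \<Longrightarrow>
   der X c (\<Gamma>, add_mset (FAt p) (snd S)) \<Longrightarrow> der X c (\<Gamma>, snd S)"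
proof (induction arbitrary: \<Gamma> rule: der.induct)
  case (ax q \<Gamma>' \<Delta>)
  show ?case
  proof (cases "FAt q \<in># \<Gamma>")
    case True then show ?thesis using ax by (auto intro: der.ax)
  next
    case False
    then have "q = p" using ax by auto
    with ax obtain K where K: "\<Delta> = add_mset (FAt p) K" by (metis multi_member_split)
    have "der X c (\<Gamma>, add_mset (FAt p) (add_mset (FAt p) K))" using ax K by simp
    from contr_at[OF this] K show ?thesis by simp
  qed
next
  case (bot \<Gamma>' \<Delta>)
  then show ?case by (auto intro: der.bot)
next
  case (impL B \<Gamma>' \<Delta> A)
  from impL.prems have e: "add_mset (FImp A B) \<Gamma>' = add_mset (FAt p) \<Gamma>" by simp
  obtain K where K: "\<Gamma>' = add_mset (FAt p) K" "\<Gamma> = add_mset (FImp A B) K"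
    using mset_add_split[OF e] by blast
  have pi: "der X c (add_mset (FImp A B) K, add_mset (FAt p) \<Delta>)" using impL.prems K by simp
  from inv_impL[OF pi] have
    p1: "der X c (add_mset B K, add_mset (FAt p) \<Delta>)" and
    p2: "der X c (K, add_mset A (add_mset (FAt p) \<Delta>))" by auto
  have i1: "der X c (add_mset B K, \<Delta>)"
    using impL.IH(1)[of "add_mset B K"] K p1 by (simp add: add_mset_commute)
  have i2: "der X c (K, add_mset A \<Delta>)"
    using impL.IH(2)[of K] K p2 by (simp add: add_mset_commute)
  show ?case using der.impL[OF i1 i2] K by simp
next
  case (impR A \<Gamma>' B \<Delta>)
  have pi: "der X c (\<Gamma>, add_mset (FImp A B) (add_mset (FAt p) \<Delta>))"
    using impR.prems by (simp add: add_mset_commute)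
  have p1: "der X c (add_mset A \<Gamma>, add_mset B (add_mset (FAt p) \<Delta>))"
    using inv_impR[OF pi] by simp
  have i: "der X c (add_mset A \<Gamma>, add_mset B \<Delta>)"
    using impR.IH[of "add_mset A \<Gamma>"] impR.prems p1 by (simp add: add_mset_commute)
  show ?case using der.impR[OF i] by simp
next
  case (refl B \<Gamma>' \<Delta>)
  from refl.prems have e: "add_mset (FBox B) \<Gamma>' = add_mset (FAt p) \<Gamma>" by simp
  obtain K where K: "\<Gamma>' = add_mset (FAt p) K" "\<Gamma> = add_mset (FBox B) K"
    using mset_add_split[OF e] by blast
  have p1: "der X c (add_mset B (add_mset (FBox B) K), add_mset (FAt p) \<Delta>)"
    using der_weakL refl.prems K by fastforce
  have i: "der X c (add_mset B (add_mset (FBox B) K), \<Delta>)"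
    using refl.IH[of "add_mset B (add_mset (FBox B) K)"] K p1 by (simp add: add_mset_commute)
  show ?case using der.refl[OF i] K by simp
next
  case (box \<Gamma>' \<Pi> A \<Delta> b)
  from box.prems have e: "\<Gamma>' + image_mset FBox \<Pi> = add_mset (FAt p) \<Gamma>" by simp
  then have "FAt p \<in># \<Gamma>'" by (metis image_iff multiset.set_map fm.distinct union_iff union_single_eq_member)
  then obtain K where K: "\<Gamma>' = add_mset (FAt p) K" by (metis multi_member_split)
  with e have G: "\<Gamma> = K + image_mset FBox \<Pi>" by simp
  have pi: "der X c (K + image_mset FBox \<Pi>, add_mset (FBox A) (add_mset (FAt p) \<Delta>))"
    using box.prems G by (simp add: add_mset_commute)
  have p1: "der X c (K + image_mset FBox \<Pi>, add_mset A (add_mset (FAt p) \<Delta>))"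
    using inv_box[OF pi] by simp
  have i: "der X c (K + image_mset FBox \<Pi>, add_mset A \<Delta>)"
    using box.IH[of "K + image_mset FBox \<Pi>"] K p1 by (simp add: add_mset_commute)
  show ?case using der.box[OF i box.hyps(2)] G by simp
next
  case (cut \<Gamma>' A \<Delta>)
  have p1: "der X c (\<Gamma>, add_mset (FAt p) (add_mset A \<Delta>))"
    using der_weakR[OF cut.prems(2), of A] by (simp add: add_mset_commute)
  have p2: "der X c (add_mset A \<Gamma>, add_mset (FAt p) \<Delta>)"
    using der_weakL[OF cut.prems(2), of A] by simp
  have i1: "der X c (\<Gamma>, add_mset A \<Delta>)" using cut.IH(1)[of \<Gamma>] cut.prems p1 by simp
  have i2: "der X c (add_mset A \<Gamma>, \<Delta>)"
    using cut.IH(2)[of "add_mset A \<Gamma>"] cut.prems p2 by (simp add: add_mset_commute)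
  show ?case using der.cut[OF cut.hyps(1) i1 i2] by simp
qed

definition shift :: "'a ptree \<Rightarrow> nat \<Rightarrow> 'a ptree" where
  "shift T i = (\<lambda>ys. T (i # ys))"

definition sub :: "'a ptree \<Rightarrow> nat list \<Rightarrow> 'a ptree" where
  "sub T b = (\<lambda>ys. T (b @ ys))"

definition mk :: "'a seq \<Rightarrow> rl \<Rightarrow> 'a ptree list \<Rightarrow> 'a ptree" where
  "mk S r cs = (\<lambda>xs. case xs of [] \<Rightarrow> Some (S, r) | i # ys \<Rightarrow> if i < length cs then (cs ! i) ys else None)"

lemma mk_Nil[simp]: "mk S r cs [] = Some (S, r)" by (simp add: mk_def)
lemma mk_Cons[simp]: "mk S r cs (i # ys) = (if i < length cs then (cs ! i) ys else None)"
  by (simp add: mk_def)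
lemma seq_at_mk_Nil[simp]: "seq_at (mk S r cs) [] = S" by (simp add: seq_at_def)
lemma rule_at_mk_Nil[simp]: "rule_at (mk S r cs) [] = r" by (simp add: rule_at_def)
lemma seq_at_mk_Cons[simp]: "i < length cs \<Longrightarrow> seq_at (mk S r cs) (i # ys) = seq_at (cs ! i) ys"
  by (simp add: seq_at_def)
lemma rule_at_mk_Cons[simp]: "i < length cs \<Longrightarrow> rule_at (mk S r cs) (i # ys) = rule_at (cs ! i) ys"
  by (simp add: rule_at_def)
lemma seq_at_shift[simp]: "seq_at (shift T i) ys = seq_at T (i # ys)"
  by (simp add: seq_at_def shift_def)
lemma rule_at_shift[simp]: "rule_at (shift T i) ys = rule_at T (i # ys)"
  by (simp add: rule_at_def shift_def)
lemma shift_app[simp]: "shift T i ys = T (i # ys)" by (simp add: shift_def)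

lemma wf_none: "wf_tree T \<Longrightarrow> T xs = None \<Longrightarrow> T (xs @ ys) = None"
proof (induction ys rule: rev_induct)
  case Nil then show ?case by simp
next
  case (snoc y ys)
  then show ?case unfolding wf_tree_def by (metis append_assoc)
qed

lemma wf_root: "wf_tree T \<Longrightarrow> T [] \<noteq> None" by (simp add: wf_tree_def)

lemma wf_child: "wf_tree T \<Longrightarrow> T [i] \<noteq> None \<longleftrightarrow> i < arity (rule_at T [])"
  unfolding wf_tree_def by (metis append_Nil)

lemma mk_decomp: "wf_tree T \<Longrightarrow> T = mk (seq_at T []) (rule_at T []) (map (shift T) [0..<arity (rule_at T [])])"
proof (rule ext)
  fix xs assume w: "wf_tree T"
  show "T xs = mk (seq_at T []) (rule_at T []) (map (shift T) [0..<arity (rule_at T [])]) xs"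
  proof (cases xs)
    case Nil then show ?thesis using wf_root[OF w] by (auto simp: seq_at_def rule_at_def)
  next
    case (Cons i ys)
    show ?thesis
    proof (cases "i < arity (rule_at T [])")
      case True then show ?thesis using Cons by simp
    next
      case False
      then have "T [i] = None" using wf_child[OF w] by blast
      then have "T ([i] @ ys) = None" using wf_none[OF w] by blast
      then show ?thesis using Cons False by simp
    qed
  qed
qed

lemma wf_mk: "length cs = arity r \<Longrightarrow> \<forall>c\<in>set cs. wf_tree c \<Longrightarrow> wf_tree (mk S r cs)"
  unfolding wf_tree_def
proof (intro conjI allI)
  fix xs i
  assume l: "length cs = arity r" and c: "\<forall>c\<in>set cs. c [] \<noteq> None \<and>
        (\<forall>xs i. (c (xs @ [i]) \<noteq> None) = (c xs \<noteq> None \<and> i < arity (rule_at c xs)))"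
  show "(mk S r cs (xs @ [i]) \<noteq> None) = (mk S r cs xs \<noteq> None \<and> i < arity (rule_at (mk S r cs) xs))"
  proof (cases xs)
    case Nil then show ?thesis using l c by (auto simp: nth_mem)
  next
    case (Cons j ys) then show ?thesis using c by (auto simp: nth_mem)
  qed
qed simp

lemma wf_shift: "wf_tree T \<Longrightarrow> i < arity (rule_at T []) \<Longrightarrow> wf_tree (shift T i)"
  unfolding wf_tree_def
  by (metis append_Cons append_Nil rule_at_shift shift_app)

lemma local_ok_shift: "local_ok (shift T i) ys = local_ok T (i # ys)"
  by (simp add: local_ok_def)

lemma local_ok_mk_Cons: "i < length cs \<Longrightarrow> local_ok (mk S r cs) (i # ys) = local_ok (cs ! i) ys"
  by (simp add: local_ok_def)

lemma rbp_mk_single: "right_box_prem (mk S r cs) [i] = (i = 1 \<and> r = RBox)"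
  by (simp add: right_box_prem_def)

lemma rbp_mk_Cons: "i < length cs \<Longrightarrow> ys \<noteq> [] \<Longrightarrow> right_box_prem (mk S r cs) (i # ys) = right_box_prem (cs ! i) ys"
  by (simp add: right_box_prem_def)

lemma rbp_shift: "ys \<noteq> [] \<Longrightarrow> right_box_prem (shift T i) ys = right_box_prem T (i # ys)"
  by (simp add: right_box_prem_def)

lemma map_upt_Suc_Cons: "map f [0..<Suc k] = f 0 # map (\<lambda>j. f (Suc j)) [0..<k]"
  by (induct k) auto

lemma inf_mk:
  assumes l: "length cs = arity r" and c: "\<forall>c\<in>set cs. is_inf_proof c"
    and lo: "local_ok (mk S r cs) []"
  shows "is_inf_proof (mk S r cs)"
  unfolding is_inf_proof_def
proof (intro conjI allI impI)
  show "wf_tree (mk S r cs)" using wf_mk[OF l] c unfolding is_inf_proof_def by blast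
next
  fix xs assume "mk S r cs xs \<noteq> None"
  then show "local_ok (mk S r cs) xs" using lo c
    by (cases xs) (auto simp: local_ok_mk_Cons is_inf_proof_def split: if_splits)
next
  fix f :: "nat \<Rightarrow> nat"
  assume a: "\<forall>k. mk S r cs (map f [0..<k]) \<noteq> None"
  define g where "g = (\<lambda>j. f (Suc j))"
  have e: "\<And>k. map f [0..<Suc k] = f 0 # map g [0..<k]" using map_upt_Suc_Cons g_def by metis
  have i: "f 0 < length cs" using a[rule_format, of 1] by (auto split: if_splits)
  let ?c = "cs ! f 0"
  have ic: "is_inf_proof ?c" using c i by auto
  have "\<forall>k. ?c (map g [0..<k]) \<noteq> None" using a e i by (metis mk_Cons)
  then have inf: "infinite {k. right_box_prem ?c (map g [0..<Suc k])}"
    using ic unfolding is_inf_proof_def by blast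
  have "Suc ` {k. right_box_prem ?c (map g [0..<Suc k])} \<subseteq> {k. right_box_prem (mk S r cs) (map f [0..<Suc k])}"
  proof
    fix x assume "x \<in> Suc ` {k. right_box_prem ?c (map g [0..<Suc k])}"
    then obtain k where x: "x = Suc k" and k: "right_box_prem ?c (map g [0..<Suc k])" by blast
    have "right_box_prem (mk S r cs) (f 0 # map g [0..<Suc k])"
      using rbp_mk_Cons[OF i, of "map g [0..<Suc k]"] k by simp
    then have "right_box_prem (mk S r cs) (map f [0..<Suc (Suc k)])" by (simp only: e)
    then show "x \<in> {k. right_box_prem (mk S r cs) (map f [0..<Suc k])}" using x by simp
  qed
  moreover have "infinite (Suc ` {k. right_box_prem ?c (map g [0..<Suc k])})"
    using inf by (simp add: finite_image_iff)
  ultimately show "infinite {k. right_box_prem (mk S r cs) (map f [0..<Suc k])}"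
    using infinite_super by blast
qed

lemma inf_shift:
  assumes T: "is_inf_proof T" and i: "i < arity (rule_at T [])"
  shows "is_inf_proof (shift T i)"
  unfolding is_inf_proof_def
proof (intro conjI allI impI)
  show "wf_tree (shift T i)" using T i wf_shift is_inf_proof_def by blast
next
  fix xs assume "shift T i xs \<noteq> None"
  then show "local_ok (shift T i) xs" using T by (simp add: local_ok_shift is_inf_proof_def)
next
  fix f' :: "nat \<Rightarrow> nat"
  assume a: "\<forall>k. shift T i (map f' [0..<k]) \<noteq> None"
  define f where "f = case_nat i f'"
  have e: "\<And>k. map f [0..<Suc k] = i # map f' [0..<k]"
    using map_upt_Suc_Cons[of f] by (simp add: f_def)
  have "\<forall>k. T (map f [0..<k]) \<noteq> None"
  proof
    fix k show "T (map f [0..<k]) \<noteq> None"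
      using a e T by (cases k) (auto simp: is_inf_proof_def wf_tree_def)
  qed
  then have inf: "infinite {k. right_box_prem T (map f [0..<Suc k])}"
    using T unfolding is_inf_proof_def by blast
  have "{k. right_box_prem T (map f [0..<Suc k])} \<subseteq> insert 0 (Suc ` {k. right_box_prem (shift T i) (map f' [0..<Suc k])})"
  proof
    fix k assume k: "k \<in> {k. right_box_prem T (map f [0..<Suc k])}"
    show "k \<in> insert 0 (Suc ` {k. right_box_prem (shift T i) (map f' [0..<Suc k])})"
    proof (cases k)
      case 0 then show ?thesis by simp
    next
      case (Suc j)
      then have "right_box_prem T (map f [0..<Suc (Suc j)])" using k by blast
      then have "right_box_prem T (i # map f' [0..<Suc j])" by (simp only: e)
      then have "right_box_prem (shift T i) (map f' [0..<Suc j])" by (simp add: rbp_shift)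
      then show ?thesis using Suc by blast
    qed
  qed
  then show "infinite {k. right_box_prem (shift T i) (map f' [0..<Suc k])}"
    using inf finite_subset by fastforce
qed

lemma box_count_Nil[simp]: "box_count T [] = 0"
  by (simp add: box_count_def)

definition dl :: "rl \<Rightarrow> nat \<Rightarrow> nat" where
  "dl r i = (if i = 1 \<and> r = RBox then 1 else 0)"

lemma box_count_mk_Cons:
  assumes i: "i < length cs"
  shows "box_count (mk S r cs) (i # ys) = box_count (cs ! i) ys + dl r i"
proof -
  let ?M = "mk S r cs" and ?c = "cs ! i"
  let ?A = "{k. 1 \<le> k \<and> k \<le> length ys \<and> right_box_prem ?c (take k ys)}"
  have rb: "\<And>zs. zs \<noteq> [] \<Longrightarrow> right_box_prem ?M (i # zs) = right_box_prem ?c zs"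
    using rbp_mk_Cons[OF i] by blast
  have eq: "{k. 1 \<le> k \<and> k \<le> length (i # ys) \<and> right_box_prem ?M (take k (i # ys))}
       = (if i = 1 \<and> r = RBox then {1} else {}) \<union> Suc ` ?A" (is "?L = ?R")
  proof (rule set_eqI)
    fix k
    show "k \<in> ?L \<longleftrightarrow> k \<in> ?R"
    proof (cases k)
      case 0 then show ?thesis by auto
    next
      case (Suc j)
      show ?thesis
      proof (cases j)
        case 0 then show ?thesis using Suc by (auto simp: rbp_mk_single)
      next
        case (Suc j')
        have "j \<le> length ys \<Longrightarrow> take j ys \<noteq> []" using Suc by (cases ys) auto
        then show ?thesis using \<open>k = Suc j\<close> Suc rb by (auto simp: image_iff)
      qed
    qed
  qed
  have fin: "finite ?A" by (rule finite_subset[of _ "{..length ys}"]) auto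
  have "card ?L = card ((if i = 1 \<and> r = RBox then {1} else {}) \<union> Suc ` ?A)" using eq by simp
  also have "\<dots> = dl r i + card ?A"
    using fin by (subst card_Un_disjoint) (auto simp: dl_def card_image)
  finally show ?thesis unfolding box_count_def by simp
qed

lemma fragment0: "fragment 0 T xs = (if xs = [] \<and> T [] \<noteq> None then Some (seq_at T [], None) else None)"
  unfolding fragment_def by (cases xs) auto

lemma fragment_mk_Nil: "n > 0 \<Longrightarrow> fragment n (mk S r cs) [] = Some (S, Some r)"
  unfolding fragment_def by simp

lemma dl_le: "dl r i \<le> 1" by (simp add: dl_def)

lemma all_less_Suc_split: "(\<forall>k<Suc m. P k) \<longleftrightarrow> P 0 \<and> (\<forall>j<m. P (Suc j))"
  by (metis less_Suc_eq_0_disj)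

lemma fragment_mk_Cons:
  assumes n: "n > 0"
  shows "fragment n (mk S r cs) (i # ys) =
    (if i < length cs then fragment (n - dl r i) (cs ! i) ys else None)"
proof (cases "i < length cs")
  case False then show ?thesis by (simp add: fragment_def)
next
  case True
  have bc: "\<And>zs. box_count (mk S r cs) (i # zs) = box_count (cs ! i) zs + dl r i"
    using box_count_mk_Cons[OF True] .
  have c1: "(\<forall>k<length (i # ys). box_count (mk S r cs) (take k (i # ys)) < n) \<longleftrightarrow>
            (\<forall>k<length ys. box_count (cs ! i) (take k ys) < n - dl r i)"
    using n dl_le[of r i] by (simp add: all_less_Suc_split bc less_diff_conv)
  have c2: "box_count (mk S r cs) (i # ys) < n \<longleftrightarrow> box_count (cs ! i) ys < n - dl r i"
    using n dl_le[of r i] bc[of ys] by linarith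
  show ?thesis unfolding fragment_def using True c1 c2 by simp
qed

lemma fragment_decomp:
  assumes w: "wf_tree T" and n: "n > 0"
  shows "fragment n T [] = Some (seq_at T [], Some (rule_at T []))"
    and "fragment n T (i # ys) = (if i < arity (rule_at T []) then fragment (n - dl (rule_at T []) i) (shift T i) ys else None)"
proof -
  have T: "T = mk (seq_at T []) (rule_at T []) (map (shift T) [0..<arity (rule_at T [])])"
    using mk_decomp[OF w] .
  show "fragment n T [] = Some (seq_at T [], Some (rule_at T []))"
    by (subst T) (simp add: fragment_mk_Nil n)
  show "fragment n T (i # ys) = (if i < arity (rule_at T []) then fragment (n - dl (rule_at T []) i) (shift T i) ys else None)"
    by (subst T) (simp add: fragment_mk_Cons n)
qed

definition cfn :: "nat \<Rightarrow> 'a ptree \<Rightarrow> bool" where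
  "cfn n T \<longleftrightarrow> (\<forall>xs s. fragment n T xs \<noteq> Some (s, Some RCut))"

lemma PPn_cfn: "PPn n = {T \<in> PP. cfn n T}"
  unfolding PPn_def cfn_def fragment_def by (auto split: if_splits)

lemma cfn0: "cfn 0 T"
  unfolding cfn_def fragment_def by auto

lemma cfn_mk:
  assumes n: "n > 0"
  shows "cfn n (mk S r cs) \<longleftrightarrow> r \<noteq> RCut \<and> (\<forall>i<length cs. cfn (n - dl r i) (cs ! i))"
proof
  assume c: "cfn n (mk S r cs)"
  have "r \<noteq> RCut" using c fragment_mk_Nil[OF n] unfolding cfn_def by metis
  moreover have "\<forall>i<length cs. cfn (n - dl r i) (cs ! i)"
    using c fragment_mk_Cons[OF n] unfolding cfn_def by (metis (no_types, lifting))
  ultimately show "r \<noteq> RCut \<and> (\<forall>i<length cs. cfn (n - dl r i) (cs ! i))" by blast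
next
  assume c: "r \<noteq> RCut \<and> (\<forall>i<length cs. cfn (n - dl r i) (cs ! i))"
  show "cfn n (mk S r cs)" unfolding cfn_def
  proof (intro allI)
    fix xs s show "fragment n (mk S r cs) xs \<noteq> Some (s, Some RCut)"
    proof (cases xs)
      case Nil then show ?thesis using c fragment_mk_Nil[OF n, of S r cs] by simp
    next
      case (Cons i ys)
      show ?thesis
      proof (cases "i < length cs")
        case True
        then have "cfn (n - dl r i) (cs ! i)" using c by blast
        moreover have "fragment n (mk S r cs) (i # ys) = fragment (n - dl r i) (cs ! i) ys"
          using fragment_mk_Cons[OF n, of S r cs i ys] True by simp
        ultimately show ?thesis using Cons unfolding cfn_def by metis
      next
        case False then show ?thesis using Cons fragment_mk_Cons[OF n, of S r cs i ys] by simp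
      qed
    qed
  qed
qed

lemma cfn_decomp:
  assumes w: "wf_tree T" and n: "n > 0" and c: "cfn n T"
  shows "rule_at T [] \<noteq> RCut" and "i < arity (rule_at T []) \<Longrightarrow> cfn (n - dl (rule_at T []) i) (shift T i)"
proof -
  have T: "T = mk (seq_at T []) (rule_at T []) (map (shift T) [0..<arity (rule_at T [])])"
    using mk_decomp[OF w] .
  have "cfn n (mk (seq_at T []) (rule_at T []) (map (shift T) [0..<arity (rule_at T [])]))"
    using c T by simp
  then have cc: "rule_at T [] \<noteq> RCut \<and> (\<forall>i<arity (rule_at T []). cfn (n - dl (rule_at T []) i) (shift T i))"
    unfolding cfn_mk[OF n] by simp
  then show "rule_at T [] \<noteq> RCut" by blast
  show "i < arity (rule_at T []) \<Longrightarrow> cfn (n - dl (rule_at T []) i) (shift T i)" using cc by blast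
qed

lemma fragment_mk_eq:
  assumes n: "n > 0" and l: "length cs = length cs'"
    and e: "\<forall>i<length cs. fragment (n - dl r i) (cs ! i) = fragment (n - dl r i) (cs' ! i)"
  shows "fragment n (mk S r cs) = fragment n (mk S r cs')"
proof
  fix xs show "fragment n (mk S r cs) xs = fragment n (mk S r cs') xs"
    using e l by (cases xs) (auto simp: fragment_mk_Nil[OF n] fragment_mk_Cons[OF n])
qed

lemma fragment0_eq: "T [] \<noteq> None \<Longrightarrow> T' [] \<noteq> None \<Longrightarrow> seq_at T [] = seq_at T' [] \<Longrightarrow>
  fragment 0 T = fragment 0 T'"
  by (rule ext) (simp add: fragment0)

datatype ('a, 'b) dv = DAx "'a seq" | DBot "'a seq"
  | DImpL "'a seq" "('a, 'b) dv" "('a, 'b) dv"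
  | DImpR "'a seq" "('a, 'b) dv"
  | DRefl "'a seq" "('a, 'b) dv"
  | DBox "'a seq" "('a, 'b) dv" "'a seq" 'b
  | DCut "'a seq" "('a, 'b) dv" "('a, 'b) dv"

primrec dconcl :: "('a, 'b) dv \<Rightarrow> 'a seq" where
  "dconcl (DAx S) = S" | "dconcl (DBot S) = S" | "dconcl (DImpL S d0 d1) = S"
| "dconcl (DImpR S d) = S" | "dconcl (DRefl S d) = S" | "dconcl (DBox S d S1 b) = S"
| "dconcl (DCut S d0 d1) = S"

primrec vd :: "('a, 'b) dv \<Rightarrow> bool" where
  "vd (DAx S) = (\<exists>p. FAt p \<in># fst S \<and> FAt p \<in># snd S)"
| "vd (DBot S) = (FBot \<in># fst S)"
| "vd (DImpL S d0 d1) = (vd d0 \<and> vd d1 \<and> (\<exists>\<Gamma> \<Delta> A B. S = (add_mset (FImp A B) \<Gamma>, \<Delta>) \<and>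
                  dconcl d0 = (add_mset B \<Gamma>, \<Delta>) \<and> dconcl d1 = (\<Gamma>, add_mset A \<Delta>)))"
| "vd (DImpR S d) = (vd d \<and> (\<exists>\<Gamma> \<Delta> A B. S = (\<Gamma>, add_mset (FImp A B) \<Delta>) \<and>
                  dconcl d = (add_mset A \<Gamma>, add_mset B \<Delta>)))"
| "vd (DRefl S d) = (vd d \<and> (\<exists>\<Gamma> \<Delta> B. S = (add_mset (FBox B) \<Gamma>, \<Delta>) \<and>
                  dconcl d = (add_mset B (add_mset (FBox B) \<Gamma>), \<Delta>)))"
| "vd (DBox S d S1 b) = (vd d \<and> (\<exists>\<Gamma> \<Pi> \<Delta> A. S = (\<Gamma> + image_mset FBox \<Pi>, add_mset (FBox A) \<Delta>) \<and>
                  dconcl d = (\<Gamma> + image_mset FBox \<Pi>, add_mset A \<Delta>) \<and>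
                  S1 = (image_mset FBox \<Pi>, {#A#})))"
| "vd (DCut S d0 d1) = (vd d0 \<and> vd d1 \<and> (\<exists>A. dconcl d0 = (fst S, add_mset A (snd S)) \<and> dconcl d1 = (add_mset A (fst S), snd S)))"

primrec exits :: "('a, 'b) dv \<Rightarrow> ('a seq \<times> 'b) set" where
  "exits (DAx S) = {}" | "exits (DBot S) = {}" | "exits (DImpL S d0 d1) = exits d0 \<union> exits d1"
| "exits (DImpR S d) = exits d" | "exits (DRefl S d) = exits d" | "exits (DBox S d S1 b) = insert (S1, b) (exits d)"
| "exits (DCut S d0 d1) = exits d0 \<union> exits d1"

primrec cutfree :: "('a, 'b) dv \<Rightarrow> bool" where
  "cutfree (DAx S) = True" | "cutfree (DBot S) = True" | "cutfree (DImpL S d0 d1) = (cutfree d0 \<and> cutfree d1)"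
| "cutfree (DImpR S d) = cutfree d" | "cutfree (DRefl S d) = cutfree d" | "cutfree (DBox S d S1 b) = cutfree d"
| "cutfree (DCut S d0 d1) = False"

primrec mapp :: "('b \<Rightarrow> 'c) \<Rightarrow> ('a, 'b) dv \<Rightarrow> ('a, 'c) dv" where
  "mapp f (DAx S) = DAx S" | "mapp f (DBot S) = DBot S" | "mapp f (DImpL S d0 d1) = DImpL S (mapp f d0) (mapp f d1)"
| "mapp f (DImpR S d) = DImpR S (mapp f d)" | "mapp f (DRefl S d) = DRefl S (mapp f d)"
| "mapp f (DBox S d S1 b) = DBox S (mapp f d) S1 (f b)"
| "mapp f (DCut S d0 d1) = DCut S (mapp f d0) (mapp f d1)"

lemma mapp_simps[simp]: "dconcl (mapp f d) = dconcl d" "vd (mapp f d) = vd d"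
  "cutfree (mapp f d) = cutfree d" "exits (mapp f d) = (\<lambda>(S, b). (S, f b)) ` exits d"
  by (induct d) auto

lemma der_mono: "der X c S \<Longrightarrow> X \<subseteq> Y \<Longrightarrow> (c' \<longrightarrow> c) \<Longrightarrow> der Y c' S"
proof (induction rule: der.induct)
  case (ax q \<Gamma> \<Delta>) then show ?case by (blast intro: der.ax)
next
  case (bot \<Gamma> \<Delta>) then show ?case by (blast intro: der.bot)
next
  case (impL B \<Gamma> \<Delta> A) then show ?case by (blast intro: der.impL)
next
  case (impR A \<Gamma> B \<Delta>) then show ?case by (blast intro: der.impR)
next
  case (refl B \<Gamma> \<Delta>) then show ?case by (blast intro: der.refl)
next
  case (box \<Gamma> \<Pi> A \<Delta> b) then show ?case by (blast intro: der.box)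
next
  case (cut \<Gamma> A \<Delta>) then show ?case by (blast intro: der.cut)
qed

lemma vd_der: "vd D \<Longrightarrow> der (exits D) (cutfree D) (dconcl D)"
proof (induction D)
  case (DAx S) then show ?case by (cases S) (auto intro: der.ax)
next
  case (DBot S) then show ?case by (cases S) (auto intro: der.bot)
next
  case (DImpL S d0 d1)
  then obtain \<Gamma> \<Delta> A B where e: "S = (add_mset (FImp A B) \<Gamma>, \<Delta>)"
    "dconcl d0 = (add_mset B \<Gamma>, \<Delta>)" "dconcl d1 = (\<Gamma>, add_mset A \<Delta>)" by auto
  have "der (exits (DImpL S d0 d1)) (cutfree (DImpL S d0 d1)) (dconcl d0)"
    using DImpL by (auto elim!: der_mono)
  moreover have "der (exits (DImpL S d0 d1)) (cutfree (DImpL S d0 d1)) (dconcl d1)"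
    using DImpL by (auto elim!: der_mono)
  ultimately show ?case using e by (auto intro: der.impL)
next
  case (DImpR S d)
  then obtain \<Gamma> \<Delta> A B where e: "S = (\<Gamma>, add_mset (FImp A B) \<Delta>)"
    "dconcl d = (add_mset A \<Gamma>, add_mset B \<Delta>)" by auto
  then show ?case using DImpR by (auto intro: der.impR)
next
  case (DRefl S d)
  then obtain \<Gamma> \<Delta> B where e: "S = (add_mset (FBox B) \<Gamma>, \<Delta>)"
    "dconcl d = (add_mset B (add_mset (FBox B) \<Gamma>), \<Delta>)" by auto
  then show ?case using DRefl by (auto intro: der.refl)
next
  case (DBox S d S1 b)
  then obtain \<Gamma> \<Pi> \<Delta> A where e: "S = (\<Gamma> + image_mset FBox \<Pi>, add_mset (FBox A) \<Delta>)"
    "dconcl d = (\<Gamma> + image_mset FBox \<Pi>, add_mset A \<Delta>)" "S1 = (image_mset FBox \<Pi>, {#A#})" by auto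
  have "der (exits (DBox S d S1 b)) (cutfree (DBox S d S1 b)) (dconcl d)"
    using DBox by (auto elim!: der_mono)
  then show ?case using e by (auto intro: der.box)
next
  case (DCut S d0 d1)
  then obtain A where e: "dconcl d0 = (fst S, add_mset A (snd S))" "dconcl d1 = (add_mset A (fst S), snd S)" by auto
  have "der (exits (DCut S d0 d1)) (cutfree (DCut S d0 d1)) (dconcl d0)"
    using DCut by (auto elim!: der_mono)
  moreover have "der (exits (DCut S d0 d1)) (cutfree (DCut S d0 d1)) (dconcl d1)"
    using DCut by (auto elim!: der_mono)
  ultimately show ?case using e der.cut[where X="exits (DCut S d0 d1)" and c="cutfree (DCut S d0 d1)" and \<Gamma>="fst S" and \<Delta>="snd S" and A=A]
    by simp
qed

lemma der_vd: "der X c S \<Longrightarrow> \<exists>D. vd D \<and> dconcl D = S \<and> exits D \<subseteq> X \<and> (c \<longrightarrow> cutfree D)"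
proof (induction rule: der.induct)
  case (ax q \<Gamma> \<Delta>) then show ?case by (intro exI[of _ "DAx (\<Gamma>, \<Delta>)"]) auto
next
  case (bot \<Gamma> \<Delta>) then show ?case by (intro exI[of _ "DBot (\<Gamma>, \<Delta>)"]) auto
next
  case (impL B \<Gamma> \<Delta> A)
  then obtain d0 d1 where "vd d0 \<and> dconcl d0 = (add_mset B \<Gamma>, \<Delta>) \<and> exits d0 \<subseteq> X \<and> (c \<longrightarrow> cutfree d0)"
    "vd d1 \<and> dconcl d1 = (\<Gamma>, add_mset A \<Delta>) \<and> exits d1 \<subseteq> X \<and> (c \<longrightarrow> cutfree d1)" by blast
  then show ?case by (intro exI[of _ "DImpL (add_mset (FImp A B) \<Gamma>, \<Delta>) d0 d1"]) auto
next
  case (impR A \<Gamma> B \<Delta>)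
  then obtain d where "vd d \<and> dconcl d = (add_mset A \<Gamma>, add_mset B \<Delta>) \<and> exits d \<subseteq> X \<and> (c \<longrightarrow> cutfree d)" by blast
  then show ?case by (intro exI[of _ "DImpR (\<Gamma>, add_mset (FImp A B) \<Delta>) d"]) auto
next
  case (refl B \<Gamma> \<Delta>)
  then obtain d where "vd d \<and> dconcl d = (add_mset B (add_mset (FBox B) \<Gamma>), \<Delta>) \<and> exits d \<subseteq> X \<and> (c \<longrightarrow> cutfree d)" by blast
  then show ?case by (intro exI[of _ "DRefl (add_mset (FBox B) \<Gamma>, \<Delta>) d"]) auto
next
  case (box \<Gamma> \<Pi> A \<Delta> b)
  then obtain d where "vd d \<and> dconcl d = (\<Gamma> + image_mset FBox \<Pi>, add_mset A \<Delta>) \<and> exits d \<subseteq> X \<and> (c \<longrightarrow> cutfree d)" by blast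
  then show ?case using box.hyps
    by (intro exI[of _ "DBox (\<Gamma> + image_mset FBox \<Pi>, add_mset (FBox A) \<Delta>) d (image_mset FBox \<Pi>, {#A#}) b"]) auto
next
  case (cut \<Gamma> A \<Delta>)
  then obtain d0 d1 where "vd d0 \<and> dconcl d0 = (\<Gamma>, add_mset A \<Delta>) \<and> exits d0 \<subseteq> X \<and> (c \<longrightarrow> cutfree d0)"
    "vd d1 \<and> dconcl d1 = (add_mset A \<Gamma>, \<Delta>) \<and> exits d1 \<subseteq> X \<and> (c \<longrightarrow> cutfree d1)" by blast
  then show ?case using cut.hyps by (intro exI[of _ "DCut (\<Gamma>, \<Delta>) d0 d1"]) auto
qed

lemma elim_exists:
  assumes "vd D1" "dconcl D1 = (\<Gamma>, add_mset (FAt p) \<Delta>)" "vd D2" "dconcl D2 = (add_mset (FAt p) \<Gamma>, \<Delta>)"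
  shows "\<exists>D. vd D \<and> dconcl D = (\<Gamma>, \<Delta>) \<and> exits D \<subseteq> exits D1 \<union> exits D2 \<and> (cutfree D1 \<and> cutfree D2 \<longrightarrow> cutfree D)"
proof -
  let ?X = "exits D1 \<union> exits D2" and ?c = "cutfree D1 \<and> cutfree D2"
  have d1: "der ?X ?c (\<Gamma>, add_mset (FAt p) \<Delta>)" using vd_der[OF assms(1)] assms(2) by (auto elim!: der_mono)
  have d2: "der ?X ?c (add_mset (FAt p) \<Gamma>, \<Delta>)" using vd_der[OF assms(3)] assms(4) by (auto elim!: der_mono)
  have "der ?X ?c (\<Gamma>, \<Delta>)" using atcut[OF d2, of p \<Gamma>] d1 by simp
  from der_vd[OF this] show ?thesis .
qed

primrec compose :: "('a, 'b) dv \<Rightarrow> ('b \<Rightarrow> 'a ptree) \<Rightarrow> 'a ptree" where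
  "compose (DAx S) R = mk S RAx []"
| "compose (DBot S) R = mk S RBotL []"
| "compose (DImpL S d0 d1) R = mk S RImpL [compose d0 R, compose d1 R]"
| "compose (DImpR S d) R = mk S RImpR [compose d R]"
| "compose (DRefl S d) R = mk S RRefl [compose d R]"
| "compose (DBox S d S1 b) R = mk S RBox [compose d R, R b]"
| "compose (DCut S d0 d1) R = mk S RCut [compose d0 R, compose d1 R]"

lemma concl_mk[simp]: "concl (mk S r cs) = S" by (simp add: concl_def)

lemma compose_PP:
  "vd D \<Longrightarrow> (\<forall>(S1, b)\<in>exits D. is_inf_proof (R b) \<and> concl (R b) = S1) \<Longrightarrow>
   is_inf_proof (compose D R) \<and> concl (compose D R) = dconcl D"
proof (induction D)
  case (DAx S) then show ?case by (auto intro!: inf_mk simp: local_ok_def)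
next
  case (DBot S) then show ?case by (auto intro!: inf_mk simp: local_ok_def)
next
  case (DImpL S d0 d1) then show ?case
    by (auto intro!: inf_mk simp: local_ok_def concl_def)
next
  case (DImpR S d) then show ?case by (auto intro!: inf_mk simp: local_ok_def concl_def) blast
next
  case (DRefl S d) then show ?case by (auto intro!: inf_mk simp: local_ok_def concl_def) blast
next
  case (DBox S d S1 b) then show ?case by (auto intro!: inf_mk simp: local_ok_def concl_def) blast
next
  case (DCut S d0 d1) then show ?case by (auto intro!: inf_mk simp: local_ok_def concl_def)
qed

lemma less2: "(i::nat) < 2 \<longleftrightarrow> i = 0 \<or> i = 1" by auto

lemma compose_frag:
  assumes n: "n > 0"
  shows "(\<forall>(S1, b)\<in>exits D. R b [] \<noteq> None \<and> R' b [] \<noteq> None \<and> seq_at (R b) [] = seq_at (R' b) [] \<and> sim (n - 1) (R b) (R' b))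
   \<Longrightarrow> fragment n (compose D R) = fragment n (compose D R')"
proof (induction D)
  case (DBox S d S1 b)
  have e1: "fragment (n - 1) (R b) = fragment (n - 1) (R' b)"
  proof (cases "n - 1 = 0")
    case True then show ?thesis using DBox.prems fragment0_eq by fastforce
  next
    case False then show ?thesis using DBox.prems by (auto simp: sim_def)
  qed
  show ?case using DBox e1 by (auto intro!: fragment_mk_eq[OF n] simp: dl_def less2 less_Suc_eq)
qed (auto intro!: fragment_mk_eq[OF n] simp: dl_def less2 less_Suc_eq)

lemma compose_cfn:
  assumes n: "n > 0"
  shows "cutfree D \<Longrightarrow> (\<forall>(S1, b)\<in>exits D. cfn (n - 1) (R b)) \<Longrightarrow> cfn n (compose D R)"
  by (induction D) (auto simp: cfn_mk[OF n] dl_def less2 less_Suc_eq)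

inductive rep :: "'a ptree \<Rightarrow> ('a, nat list) dv \<Rightarrow> bool" where
  rAx: "T [] = Some (S, RAx) \<Longrightarrow> rep T (DAx S)"
| rBot: "T [] = Some (S, RBotL) \<Longrightarrow> rep T (DBot S)"
| rImpL: "T [] = Some (S, RImpL) \<Longrightarrow> rep (shift T 0) d0 \<Longrightarrow> rep (shift T 1) d1 \<Longrightarrow>
    rep T (DImpL S (mapp (Cons 0) d0) (mapp (Cons 1) d1))"
| rImpR: "T [] = Some (S, RImpR) \<Longrightarrow> rep (shift T 0) d \<Longrightarrow> rep T (DImpR S (mapp (Cons 0) d))"
| rRefl: "T [] = Some (S, RRefl) \<Longrightarrow> rep (shift T 0) d \<Longrightarrow> rep T (DRefl S (mapp (Cons 0) d))"
| rBox: "T [] = Some (S, RBox) \<Longrightarrow> rep (shift T 0) d \<Longrightarrow>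
    rep T (DBox S (mapp (Cons 0) d) (seq_at T [1]) [1])"
| rCut: "T [] = Some (S, RCut) \<Longrightarrow> rep (shift T 0) d0 \<Longrightarrow> rep (shift T 1) d1 \<Longrightarrow>
    rep T (DCut S (mapp (Cons 0) d0) (mapp (Cons 1) d1))"

lemma rep_unique: "rep T D \<Longrightarrow> rep T D' \<Longrightarrow> D = D'"
proof (induction arbitrary: D' rule: rep.induct)
  case (rAx T S) from rAx.prems rAx.hyps show ?case by cases simp_all
next
  case (rBot T S) from rBot.prems rBot.hyps show ?case by cases simp_all
next
  case (rImpL T S d0 d1) from rImpL.prems rImpL.hyps(1) show ?case
    by cases (auto dest: rImpL.IH(1) rImpL.IH(2)[unfolded One_nat_def])
next
  case (rImpR T S d) from rImpR.prems rImpR.hyps(1) show ?case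
    by cases (auto dest: rImpR.IH)
next
  case (rRefl T S d) from rRefl.prems rRefl.hyps(1) show ?case
    by cases (auto dest: rRefl.IH)
next
  case (rBox T S d) from rBox.prems rBox.hyps(1) show ?case
    by cases (auto dest: rBox.IH)
next
  case (rCut T S d0 d1) from rCut.prems rCut.hyps(1) show ?case
    by cases (auto dest: rCut.IH(1) rCut.IH(2)[unfolded One_nat_def])
qed

lemma rep_step:
  assumes T: "is_inf_proof T" and nr: "\<not> (\<exists>D. rep T D)"
  shows "\<exists>i. i < arity (rule_at T []) \<and> \<not> (i = 1 \<and> rule_at T [] = RBox) \<and> \<not> (\<exists>D. rep (shift T i) D)"
proof -
  obtain S r where Sr: "T [] = Some (S, r)" using T unfolding is_inf_proof_def wf_tree_def by auto
  then have ru: "rule_at T [] = r" by (simp add: rule_at_def)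
  show ?thesis
  proof (cases r)
    case RAx then show ?thesis using nr Sr rep.rAx by blast
  next
    case RBotL then show ?thesis using nr Sr rep.rBot by blast
  next
    case RImpL
    have "\<not> (\<exists>d. rep (shift T 0) d) \<or> \<not> (\<exists>d. rep (shift T 1) d)" using nr Sr RImpL rep.rImpL by blast
    then show ?thesis
    proof
      assume "\<not> (\<exists>d. rep (shift T 0) d)" then show ?thesis using ru RImpL by (intro exI[of _ 0]) simp
    next
      assume "\<not> (\<exists>d. rep (shift T 1) d)" then show ?thesis using ru RImpL by (intro exI[of _ 1]) simp
    qed
  next
    case RImpR
    have "\<not> (\<exists>d. rep (shift T 0) d)" using nr Sr RImpR rep.rImpR by blast
    then show ?thesis using ru RImpR by (intro exI[of _ 0]) simp
  next
    case RRefl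
    have "\<not> (\<exists>d. rep (shift T 0) d)" using nr Sr RRefl rep.rRefl by blast
    then show ?thesis using ru RRefl by (intro exI[of _ 0]) simp
  next
    case RBox
    have "\<not> (\<exists>d. rep (shift T 0) d)" using nr Sr RBox rep.rBox by blast
    then show ?thesis using ru RBox by (intro exI[of _ 0]) simp
  next
    case RCut
    have "\<not> (\<exists>d. rep (shift T 0) d) \<or> \<not> (\<exists>d. rep (shift T 1) d)" using nr Sr RCut rep.rCut by blast
    then show ?thesis
    proof
      assume "\<not> (\<exists>d. rep (shift T 0) d)" then show ?thesis using ru RCut by (intro exI[of _ 0]) simp
    next
      assume "\<not> (\<exists>d. rep (shift T 1) d)" then show ?thesis using ru RCut by (intro exI[of _ 1]) simp
    qed
  qed
qed

lemma rep_exists: "is_inf_proof T \<Longrightarrow> \<exists>D. rep T D"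
proof (rule ccontr)
  assume T0: "is_inf_proof T" and nr: "\<not> (\<exists>D. rep T D)"
  let ?P = "\<lambda>T. is_inf_proof T \<and> \<not> (\<exists>D. rep T D)"
  define nx where "nx T = (SOME i. i < arity (rule_at T []) \<and> \<not> (i = 1 \<and> rule_at T [] = RBox) \<and> \<not> (\<exists>D. rep (shift T i) D))" for T :: "'a ptree"
  have stp: "nx T' < arity (rule_at T' []) \<and> \<not> (nx T' = 1 \<and> rule_at T' [] = RBox) \<and> ?P (shift T' (nx T'))"
    if "?P T'" for T'
  proof -
    have "nx T' < arity (rule_at T' []) \<and> \<not> (nx T' = 1 \<and> rule_at T' [] = RBox) \<and> \<not> (\<exists>D. rep (shift T' (nx T')) D)"
      unfolding nx_def using someI_ex[OF rep_step[of T']] that by blast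
    then show ?thesis using inf_shift that by blast
  qed
  define tr where "tr k = ((\<lambda>T'. shift T' (nx T')) ^^ k) T" for k
  have Ptr: "?P (tr k)" for k
    by (induction k) (auto simp: tr_def T0 nr stp simp del: shift_app)
  define f where "f k = nx (tr k)" for k
  have trf: "tr k = (\<lambda>ys. T (map f [0..<k] @ ys))" for k
  proof (induction k)
    case 0 then show ?case by (simp add: tr_def)
  next
    case (Suc k)
    have "tr (Suc k) = shift (tr k) (f k)" by (simp add: tr_def f_def del: shift_app)
    then show ?case using Suc by (auto simp: shift_def)
  qed
  have "\<forall>k. T (map f [0..<k]) \<noteq> None"
  proof
    fix k
    have "tr k [] \<noteq> None" using Ptr[of k] by (auto simp: is_inf_proof_def wf_tree_def)
    then show "T (map f [0..<k]) \<noteq> None" using trf[of k] by simp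
  qed
  then have inf: "infinite {k. right_box_prem T (map f [0..<Suc k])}"
    using T0 unfolding is_inf_proof_def by blast
  have "{k. right_box_prem T (map f [0..<Suc k])} = {}"
  proof -
    have "\<not> right_box_prem T (map f [0..<Suc k])" for k
    proof
      assume "right_box_prem T (map f [0..<Suc k])"
      then have "f k = 1" "rule_at T (map f [0..<k]) = RBox"
        unfolding right_box_prem_def by auto
      moreover have "rule_at (tr k) [] = rule_at T (map f [0..<k])"
        using trf[of k] by (simp add: rule_at_def)
      ultimately show False using stp[OF Ptr[of k]] f_def by simp
    qed
    then show ?thesis by blast
  qed
  with inf show False by simp
qed

lemma root_some: "T [] = Some (S, r) \<Longrightarrow> seq_at T [] = S \<and> rule_at T [] = r \<and> concl T = S"
  by (simp add: seq_at_def rule_at_def concl_def)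

lemma sub_Cons: "sub T (i # b) = sub (shift T i) b" by (simp add: sub_def shift_def)
lemma sub_Nil[simp]: "sub T [] = T" by (simp add: sub_def)
lemma sub_single: "sub T [i] = shift T i" by (simp add: sub_def shift_def)
lemma concl_shift: "concl (shift T i) = seq_at T [i]" by (simp add: concl_def)

lemma rep_valid: "rep T D \<Longrightarrow> is_inf_proof T \<Longrightarrow>
  vd D \<and> dconcl D = concl T \<and> (\<forall>(S1, b)\<in>exits D. is_inf_proof (sub T b) \<and> concl (sub T b) = S1)"
proof (induction rule: rep.induct)
  case (rAx T S)
  have lo: "local_ok T []" using rAx.prems rAx.hyps(1) by (auto simp: is_inf_proof_def)
  then show ?case using root_some[where T=T, OF rAx.hyps] by (auto simp: local_ok_def)
next
  case (rBot T S)
  have lo: "local_ok T []" using rBot.prems rBot.hyps(1) by (auto simp: is_inf_proof_def)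
  then show ?case using root_some[where T=T, OF rBot.hyps] by (auto simp: local_ok_def)
next
  case (rImpL T S d0 d1)
  have lo: "local_ok T []" using rImpL.prems rImpL.hyps(1) by (auto simp: is_inf_proof_def)
  have i0: "is_inf_proof (shift T 0)" and i1: "is_inf_proof (shift T 1)"
    using inf_shift[OF rImpL.prems] root_some[where T=T, OF rImpL.hyps(1)] by auto
  show ?case using rImpL.IH(1)[OF i0] rImpL.IH(2)[OF i1] lo root_some[where T=T, OF rImpL.hyps(1)]
    by (auto simp: local_ok_def concl_shift sub_Cons simp del: shift_app)
next
  case (rImpR T S d)
  have lo: "local_ok T []" using rImpR.prems rImpR.hyps(1) by (auto simp: is_inf_proof_def)
  have i0: "is_inf_proof (shift T 0)"
    using inf_shift[OF rImpR.prems] root_some[where T=T, OF rImpR.hyps(1)] by auto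
  show ?case using rImpR.IH(1)[OF i0] lo root_some[where T=T, OF rImpR.hyps(1)]
    by (auto simp: local_ok_def concl_shift sub_Cons simp del: shift_app)
next
  case (rRefl T S d)
  have lo: "local_ok T []" using rRefl.prems rRefl.hyps(1) by (auto simp: is_inf_proof_def)
  have i0: "is_inf_proof (shift T 0)"
    using inf_shift[OF rRefl.prems] root_some[where T=T, OF rRefl.hyps(1)] by auto
  show ?case using rRefl.IH(1)[OF i0] lo root_some[where T=T, OF rRefl.hyps(1)]
    by (auto simp: local_ok_def concl_shift sub_Cons simp del: shift_app)
next
  case (rBox T S d)
  have lo: "local_ok T []" using rBox.prems rBox.hyps(1) by (auto simp: is_inf_proof_def)
  have i0: "is_inf_proof (shift T 0)" and i1: "is_inf_proof (shift T 1)"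
    using inf_shift[OF rBox.prems] root_some[where T=T, OF rBox.hyps(1)] by auto
  show ?case using rBox.IH(1)[OF i0] lo root_some[where T=T, OF rBox.hyps(1)] i1
    by (auto simp: local_ok_def concl_shift sub_Cons sub_single simp del: shift_app)
next
  case (rCut T S d0 d1)
  have lo: "local_ok T []" using rCut.prems rCut.hyps(1) by (auto simp: is_inf_proof_def)
  have i0: "is_inf_proof (shift T 0)" and i1: "is_inf_proof (shift T 1)"
    using inf_shift[OF rCut.prems] root_some[where T=T, OF rCut.hyps(1)] by auto
  show ?case using rCut.IH(1)[OF i0] rCut.IH(2)[OF i1] lo root_some[where T=T, OF rCut.hyps(1)]
    by (auto simp: local_ok_def concl_shift sub_Cons simp del: shift_app)
qed

lemma frag_root: "T [] \<noteq> None \<Longrightarrow> fragment m T [] = Some (seq_at T [], if 0 < m then Some (rule_at T []) else None)"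
  by (simp add: fragment_def)

lemma child_frag:
  assumes w: "wf_tree T" and w': "wf_tree T'" and n: "n > 0" and e: "fragment n T = fragment n T'"
  shows "seq_at T [] = seq_at T' [] \<and> rule_at T [] = rule_at T' [] \<and>
    (\<forall>i < arity (rule_at T []). fragment (n - dl (rule_at T []) i) (shift T i) = fragment (n - dl (rule_at T []) i) (shift T' i))"
proof -
  have r: "seq_at T [] = seq_at T' [] \<and> rule_at T [] = rule_at T' []"
    using fragment_decomp(1)[OF w n] fragment_decomp(1)[OF w' n] e by simp
  have "fragment (n - dl (rule_at T []) i) (shift T i) = fragment (n - dl (rule_at T []) i) (shift T' i)"
    if i: "i < arity (rule_at T [])" for i
  proof
    fix ys
    show "fragment (n - dl (rule_at T []) i) (shift T i) ys = fragment (n - dl (rule_at T []) i) (shift T' i) ys"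
      using fragment_decomp(2)[OF w n, of i ys] fragment_decomp(2)[OF w' n, of i ys] e r i by simp
  qed
  then show ?thesis using r by blast
qed

lemma rep_invAx: "rep T D \<Longrightarrow> rule_at T [] = RAx \<Longrightarrow> D = DAx (seq_at T [])"
  by (erule rep.cases) (auto simp: rule_at_def seq_at_def)
lemma rep_invBot: "rep T D \<Longrightarrow> rule_at T [] = RBotL \<Longrightarrow> D = DBot (seq_at T [])"
  by (erule rep.cases) (auto simp: rule_at_def seq_at_def)
lemma rep_invImpL: "rep T D \<Longrightarrow> rule_at T [] = RImpL \<Longrightarrow> \<exists>d0 d1. D = DImpL (seq_at T []) (mapp (Cons 0) d0) (mapp (Cons 1) d1) \<and> rep (shift T 0) d0 \<and> rep (shift T 1) d1"
  by (erule rep.cases) (auto simp: rule_at_def seq_at_def simp del: shift_app)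
lemma rep_invImpR: "rep T D \<Longrightarrow> rule_at T [] = RImpR \<Longrightarrow> \<exists>d. D = DImpR (seq_at T []) (mapp (Cons 0) d) \<and> rep (shift T 0) d"
  by (erule rep.cases) (auto simp: rule_at_def seq_at_def simp del: shift_app)
lemma rep_invRefl: "rep T D \<Longrightarrow> rule_at T [] = RRefl \<Longrightarrow> \<exists>d. D = DRefl (seq_at T []) (mapp (Cons 0) d) \<and> rep (shift T 0) d"
  by (erule rep.cases) (auto simp: rule_at_def seq_at_def simp del: shift_app)
lemma rep_invBox: "rep T D \<Longrightarrow> rule_at T [] = RBox \<Longrightarrow> \<exists>d. D = DBox (seq_at T []) (mapp (Cons 0) d) (seq_at T [1]) [1] \<and> rep (shift T 0) d"
  by (erule rep.cases) (auto simp: rule_at_def seq_at_def simp del: shift_app)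
lemma rep_invCut: "rep T D \<Longrightarrow> rule_at T [] = RCut \<Longrightarrow> \<exists>d0 d1. D = DCut (seq_at T []) (mapp (Cons 0) d0) (mapp (Cons 1) d1) \<and> rep (shift T 0) d0 \<and> rep (shift T 1) d1"
  by (erule rep.cases) (auto simp: rule_at_def seq_at_def simp del: shift_app)

lemma rep_sim: "rep T D \<Longrightarrow> wf_tree T \<Longrightarrow> n > 0 \<Longrightarrow> rep T' D' \<Longrightarrow> wf_tree T' \<Longrightarrow> fragment n T = fragment n T' \<Longrightarrow>
  D = D' \<and> (\<forall>(S1, b)\<in>exits D. sim (n - 1) (sub T b) (sub T' b))"
proof (induction arbitrary: T' D' rule: rep.induct)
  case (rAx T S)
  have rs: "seq_at T [] = S" "rule_at T [] = RAx" using root_some[where T=T, OF rAx.hyps(1)] by auto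
  have cf: "seq_at T' [] = S" "rule_at T' [] = RAx" using child_frag[OF rAx.prems(1,4,2,5)] rs by auto
  show ?case using rep_invAx[OF rAx.prems(3)] cf by simp
next
  case (rBot T S)
  have rs: "seq_at T [] = S" "rule_at T [] = RBotL" using root_some[where T=T, OF rBot.hyps(1)] by auto
  have cf: "seq_at T' [] = S" "rule_at T' [] = RBotL" using child_frag[OF rBot.prems(1,4,2,5)] rs by auto
  show ?case using rep_invBot[OF rBot.prems(3)] cf by simp
next
  case (rImpL T S d0 d1)
  have rs: "seq_at T [] = S" "rule_at T [] = RImpL" using root_some[where T=T, OF rImpL.hyps(1)] by auto
  have cf: "seq_at T' [] = S" "rule_at T' [] = RImpL"
    "fragment n (shift T 0) = fragment n (shift T' 0)" "fragment n (shift T 1) = fragment n (shift T' 1)"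
    using child_frag[OF rImpL.prems(1,4,2,5)] rs by (auto simp: dl_def)
  obtain d0' d1' where D': "D' = DImpL S (mapp (Cons 0) d0') (mapp (Cons 1) d1')" "rep (shift T' 0) d0'" "rep (shift T' 1) d1'"
    using rep_invImpL[OF rImpL.prems(3)] cf by auto
  have w: "wf_tree (shift T 0)" "wf_tree (shift T 1)" "wf_tree (shift T' 0)" "wf_tree (shift T' 1)"
    using rImpL.prems rs cf by (auto intro!: wf_shift)
  note i0 = rImpL.IH(1)[OF w(1) rImpL.prems(2) D'(2) w(3) cf(3)]
  note i1 = rImpL.IH(2)[OF w(2) rImpL.prems(2) D'(3) w(4) cf(4)]
  show ?case using i0 i1 D' by (auto simp: sub_Cons simp del: shift_app)
next
  case (rImpR T S d)
  have rs: "seq_at T [] = S" "rule_at T [] = RImpR" using root_some[where T=T, OF rImpR.hyps(1)] by auto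
  have cf: "seq_at T' [] = S" "rule_at T' [] = RImpR"
    "fragment n (shift T 0) = fragment n (shift T' 0)"
    using child_frag[OF rImpR.prems(1,4,2,5)] rs by (auto simp: dl_def)
  obtain d' where D': "D' = DImpR S (mapp (Cons 0) d')" "rep (shift T' 0) d'"
    using rep_invImpR[OF rImpR.prems(3)] cf by auto
  have w: "wf_tree (shift T 0)" "wf_tree (shift T' 0)"
    using rImpR.prems rs cf by (auto intro!: wf_shift)
  note i0 = rImpR.IH(1)[OF w(1) rImpR.prems(2) D'(2) w(2) cf(3)]
  show ?case using i0 D' by (auto simp: sub_Cons simp del: shift_app)
next
  case (rRefl T S d)
  have rs: "seq_at T [] = S" "rule_at T [] = RRefl" using root_some[where T=T, OF rRefl.hyps(1)] by auto
  have cf: "seq_at T' [] = S" "rule_at T' [] = RRefl"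
    "fragment n (shift T 0) = fragment n (shift T' 0)"
    using child_frag[OF rRefl.prems(1,4,2,5)] rs by (auto simp: dl_def)
  obtain d' where D': "D' = DRefl S (mapp (Cons 0) d')" "rep (shift T' 0) d'"
    using rep_invRefl[OF rRefl.prems(3)] cf by auto
  have w: "wf_tree (shift T 0)" "wf_tree (shift T' 0)"
    using rRefl.prems rs cf by (auto intro!: wf_shift)
  note i0 = rRefl.IH(1)[OF w(1) rRefl.prems(2) D'(2) w(2) cf(3)]
  show ?case using i0 D' by (auto simp: sub_Cons simp del: shift_app)
next
  case (rBox T S d)
  have rs: "seq_at T [] = S" "rule_at T [] = RBox" using root_some[where T=T, OF rBox.hyps(1)] by auto
  have cf: "seq_at T' [] = S" "rule_at T' [] = RBox"
    "fragment n (shift T 0) = fragment n (shift T' 0)" "fragment (n - 1) (shift T 1) = fragment (n - 1) (shift T' 1)"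
  proof -
    note c = child_frag[OF rBox.prems(1,4,2,5)]
    have c3: "\<forall>i<2. fragment (n - dl RBox i) (shift T i) = fragment (n - dl RBox i) (shift T' i)"
      using c rs by simp
    show "seq_at T' [] = S" "rule_at T' [] = RBox" using c rs by auto
    show "fragment n (shift T 0) = fragment n (shift T' 0)" using c3[rule_format, of 0] by (simp add: dl_def)
    show "fragment (n - 1) (shift T 1) = fragment (n - 1) (shift T' 1)" using c3[rule_format, of 1] by (simp add: dl_def)
  qed
  obtain d' where D': "D' = DBox S (mapp (Cons 0) d') (seq_at T' [1]) [1]" "rep (shift T' 0) d'"
    using rep_invBox[OF rBox.prems(3)] cf by auto
  have w: "wf_tree (shift T 0)" "wf_tree (shift T' 0)" "wf_tree (shift T 1)" "wf_tree (shift T' 1)"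
    using rBox.prems rs cf by (auto intro!: wf_shift)
  have s1: "seq_at T [1] = seq_at T' [1]"
    using cf(4) frag_root[of "shift T 1" "n - 1"] frag_root[of "shift T' 1" "n - 1"] wf_root[OF w(3)] wf_root[OF w(4)]
    by (metis option.inject prod.inject seq_at_shift)
  have sm: "sim (n - 1) (shift T 1) (shift T' 1)" using cf(4) by (simp add: sim_def del: shift_app)
  note i0 = rBox.IH(1)[OF w(1) rBox.prems(2) D'(2) w(2) cf(3)]
  show ?case using i0 D' s1 sm by (auto simp: sub_Cons sub_single simp del: shift_app)
next
  case (rCut T S d0 d1)
  have rs: "seq_at T [] = S" "rule_at T [] = RCut" using root_some[where T=T, OF rCut.hyps(1)] by auto
  have cf: "seq_at T' [] = S" "rule_at T' [] = RCut"
    "fragment n (shift T 0) = fragment n (shift T' 0)" "fragment n (shift T 1) = fragment n (shift T' 1)"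
    using child_frag[OF rCut.prems(1,4,2,5)] rs by (auto simp: dl_def)
  obtain d0' d1' where D': "D' = DCut S (mapp (Cons 0) d0') (mapp (Cons 1) d1')" "rep (shift T' 0) d0'" "rep (shift T' 1) d1'"
    using rep_invCut[OF rCut.prems(3)] cf by auto
  have w: "wf_tree (shift T 0)" "wf_tree (shift T 1)" "wf_tree (shift T' 0)" "wf_tree (shift T' 1)"
    using rCut.prems rs cf by (auto intro!: wf_shift)
  note i0 = rCut.IH(1)[OF w(1) rCut.prems(2) D'(2) w(3) cf(3)]
  note i1 = rCut.IH(2)[OF w(2) rCut.prems(2) D'(3) w(4) cf(4)]
  show ?case using i0 i1 D' by (auto simp: sub_Cons simp del: shift_app)
qed

lemma rep_cfn: "rep T D \<Longrightarrow> wf_tree T \<Longrightarrow> n > 0 \<Longrightarrow> cfn n T \<Longrightarrow>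
  cutfree D \<and> (\<forall>(S1, b)\<in>exits D. cfn (n - 1) (sub T b))"
proof (induction rule: rep.induct)
  case (rAx T S) then show ?case by simp
next
  case (rBot T S) then show ?case by simp
next
  case (rImpL T S d0 d1)
  have rs: "rule_at T [] = RImpL" using root_some[where T=T, OF rImpL.hyps(1)] by auto
  have w: "wf_tree (shift T 0)" "wf_tree (shift T 1)" using rImpL.prems rs by (auto intro!: wf_shift)
  have c: "cfn n (shift T 0)" "cfn n (shift T 1)"
    using cfn_decomp(2)[OF rImpL.prems, of 0] cfn_decomp(2)[OF rImpL.prems, of 1] rs by (auto simp: dl_def)
  show ?case using rImpL.IH(1)[OF w(1) rImpL.prems(2) c(1)] rImpL.IH(2)[OF w(2) rImpL.prems(2) c(2)]
    by (auto simp: sub_Cons simp del: shift_app)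
next
  case (rImpR T S d)
  have rs: "rule_at T [] = RImpR" using root_some[where T=T, OF rImpR.hyps(1)] by auto
  have w: "wf_tree (shift T 0)" using rImpR.prems rs by (auto intro!: wf_shift)
  have c: "cfn n (shift T 0)" using cfn_decomp(2)[OF rImpR.prems, of 0] rs by (auto simp: dl_def)
  show ?case using rImpR.IH(1)[OF w(1) rImpR.prems(2) c(1)] by (auto simp: sub_Cons simp del: shift_app)
next
  case (rRefl T S d)
  have rs: "rule_at T [] = RRefl" using root_some[where T=T, OF rRefl.hyps(1)] by auto
  have w: "wf_tree (shift T 0)" using rRefl.prems rs by (auto intro!: wf_shift)
  have c: "cfn n (shift T 0)" using cfn_decomp(2)[OF rRefl.prems, of 0] rs by (auto simp: dl_def)
  show ?case using rRefl.IH(1)[OF w(1) rRefl.prems(2) c(1)] by (auto simp: sub_Cons simp del: shift_app)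
next
  case (rBox T S d)
  have rs: "rule_at T [] = RBox" using root_some[where T=T, OF rBox.hyps(1)] by auto
  have w: "wf_tree (shift T 0)" using rBox.prems rs by (auto intro!: wf_shift)
  have c: "cfn n (shift T 0)" "cfn (n - 1) (shift T 1)"
    using cfn_decomp(2)[OF rBox.prems, of 0] cfn_decomp(2)[OF rBox.prems, of 1] rs by (auto simp: dl_def)
  show ?case using rBox.IH(1)[OF w(1) rBox.prems(2) c(1)] c(2)
    by (auto simp: sub_Cons sub_single simp del: shift_app)
next
  case (rCut T S d0 d1)
  have rs: "rule_at T [] = RCut" using root_some[where T=T, OF rCut.hyps(1)] by auto
  then show ?case using cfn_decomp(1)[OF rCut.prems] by simp
qed

definition dec :: "'a ptree \<Rightarrow> ('a, nat list) dv" where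
  "dec T = (THE D. rep T D)"

lemma dec_rep: "is_inf_proof T \<Longrightarrow> rep T (dec T)"
  unfolding dec_def using rep_exists rep_unique by (metis theI)

definition Rp :: "'a ptree \<Rightarrow> 'a ptree \<Rightarrow> nat list + nat list \<Rightarrow> 'a ptree" where
  "Rp \<pi> \<tau> x = (case x of Inl b \<Rightarrow> sub \<pi> b | Inr b \<Rightarrow> sub \<tau> b)"

definition botT :: "'a ptree" where
  "botT = mk ({#FBot#}, {#}) RBotL []"

lemma botT_PP: "is_inf_proof botT"
  unfolding botT_def by (rule inf_mk) (auto simp: local_ok_def)

lemma botT_cfn: "cfn n botT"
  by (cases "n = 0") (auto simp: cfn0 botT_def cfn_mk)

definition Ecut :: "'a \<Rightarrow> ('a, 'b) dv \<Rightarrow> ('a, 'b) dv \<Rightarrow> ('a, 'b) dv" where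
  "Ecut p D1 D2 = (SOME D. vd D \<and> dconcl D = (fst (dconcl D1), snd (dconcl D1) - {#FAt p#}) \<and>
      exits D \<subseteq> exits D1 \<union> exits D2 \<and> (cutfree D1 \<and> cutfree D2 \<longrightarrow> cutfree D))"

definition cnd :: "'a \<Rightarrow> 'a ptree \<Rightarrow> 'a ptree \<Rightarrow> bool" where
  "cnd p \<pi> \<tau> \<longleftrightarrow> is_inf_proof \<pi> \<and> is_inf_proof \<tau> \<and> FAt p \<in># snd (concl \<pi>) \<and>
     concl \<tau> = (add_mset (FAt p) (fst (concl \<pi>)), snd (concl \<pi>) - {#FAt p#})"

definition DD :: "'a \<Rightarrow> 'a ptree \<Rightarrow> 'a ptree \<Rightarrow> ('a, nat list + nat list) dv" where
  "DD p \<pi> \<tau> = Ecut p (mapp Inl (dec \<pi>)) (mapp Inr (dec \<tau>))"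

definition ure :: "'a \<Rightarrow> 'a ptree \<Rightarrow> 'a ptree \<Rightarrow> 'a ptree" where
  "ure p \<pi> \<tau> = (if cnd p \<pi> \<tau> then compose (DD p \<pi> \<tau>) (Rp \<pi> \<tau>) else botT)"

lemma DD_good:
  assumes c: "cnd p \<pi> \<tau>"
  shows "vd (DD p \<pi> \<tau>) \<and> dconcl (DD p \<pi> \<tau>) = (fst (concl \<pi>), snd (concl \<pi>) - {#FAt p#}) \<and>
    exits (DD p \<pi> \<tau>) \<subseteq> exits (mapp Inl (dec \<pi>)) \<union> exits (mapp Inr (dec \<tau>)) \<and>
    (cutfree (dec \<pi>) \<and> cutfree (dec \<tau>) \<longrightarrow> cutfree (DD p \<pi> \<tau>))"
proof -
  let ?D1 = "mapp Inl (dec \<pi>)" and ?D2 = "mapp Inr (dec \<tau>)"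
  have ip: "is_inf_proof \<pi>" "is_inf_proof \<tau>" using c by (auto simp: cnd_def)
  have v1: "vd ?D1 \<and> dconcl ?D1 = concl \<pi>" using rep_valid[OF dec_rep[OF ip(1)] ip(1)] by simp
  have v2: "vd ?D2 \<and> dconcl ?D2 = concl \<tau>" using rep_valid[OF dec_rep[OF ip(2)] ip(2)] by simp
  let ?G = "fst (concl \<pi>)" and ?De = "snd (concl \<pi>) - {#FAt p#}"
  have e1: "dconcl ?D1 = (?G, add_mset (FAt p) ?De)" using v1 c by (auto simp: cnd_def)
  have e2: "dconcl ?D2 = (add_mset (FAt p) ?G, ?De)" using v2 c by (auto simp: cnd_def)
  have ex: "\<exists>D. vd D \<and> dconcl D = (fst (dconcl ?D1), snd (dconcl ?D1) - {#FAt p#}) \<and>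
      exits D \<subseteq> exits ?D1 \<union> exits ?D2 \<and> (cutfree ?D1 \<and> cutfree ?D2 \<longrightarrow> cutfree D)"
    using elim_exists[of ?D1 ?G p ?De ?D2] v1 v2 e1 e2 by simp
  show ?thesis using someI_ex[OF ex] e1 unfolding DD_def Ecut_def by simp
qed

lemma DD_exits:
  assumes c: "cnd p \<pi> \<tau>" and x: "(S1, x) \<in> exits (DD p \<pi> \<tau>)"
  shows "(\<exists>b. x = Inl b \<and> (S1, b) \<in> exits (dec \<pi>)) \<or> (\<exists>b. x = Inr b \<and> (S1, b) \<in> exits (dec \<tau>))"
  using DD_good[OF c] x by auto

lemma ure_PP: "is_inf_proof \<pi> \<Longrightarrow> is_inf_proof \<tau> \<Longrightarrow> is_inf_proof (ure p \<pi> \<tau>) \<and>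
   (cnd p \<pi> \<tau> \<longrightarrow> concl (ure p \<pi> \<tau>) = (fst (concl \<pi>), snd (concl \<pi>) - {#FAt p#}))"
proof (cases "cnd p \<pi> \<tau>")
  case False then show ?thesis by (simp add: ure_def botT_PP)
next
  case True
  assume ip: "is_inf_proof \<pi>" "is_inf_proof \<tau>"
  have "\<forall>(S1, x)\<in>exits (DD p \<pi> \<tau>). is_inf_proof (Rp \<pi> \<tau> x) \<and> concl (Rp \<pi> \<tau> x) = S1"
  proof (clarify)
    fix S1 x assume "(S1, x) \<in> exits (DD p \<pi> \<tau>)"
    then have "(\<exists>b. x = Inl b \<and> (S1, b) \<in> exits (dec \<pi>)) \<or> (\<exists>b. x = Inr b \<and> (S1, b) \<in> exits (dec \<tau>))"
      using DD_exits[OF True] by blast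
    then show "is_inf_proof (Rp \<pi> \<tau> x) \<and> concl (Rp \<pi> \<tau> x) = S1"
    proof
      assume "\<exists>b. x = Inl b \<and> (S1, b) \<in> exits (dec \<pi>)"
      then obtain b where b: "x = Inl b" "(S1, b) \<in> exits (dec \<pi>)" by blast
      then show ?thesis using rep_valid[OF dec_rep[OF ip(1)] ip(1)] by (auto simp: Rp_def)
    next
      assume "\<exists>b. x = Inr b \<and> (S1, b) \<in> exits (dec \<tau>)"
      then obtain b where b: "x = Inr b" "(S1, b) \<in> exits (dec \<tau>)" by blast
      then show ?thesis using rep_valid[OF dec_rep[OF ip(2)] ip(2)] by (auto simp: Rp_def)
    qed
  qed
  then show ?thesis using compose_PP[of "DD p \<pi> \<tau>" "Rp \<pi> \<tau>"] DD_good[OF True] True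
    by (simp add: ure_def)
qed

lemma inf_wf: "is_inf_proof T \<Longrightarrow> wf_tree T" by (simp add: is_inf_proof_def)

lemma frag_concl: "n > 0 \<Longrightarrow> wf_tree T \<Longrightarrow> wf_tree T' \<Longrightarrow> fragment n T = fragment n T' \<Longrightarrow> concl T = concl T'"
  using child_frag by (metis concl_def)

lemma exit_side:
  assumes ip: "is_inf_proof \<pi>" and ip': "is_inf_proof \<pi>'" and n: "n > 0" and e: "fragment n \<pi> = fragment n \<pi>'"
  shows "dec \<pi> = dec \<pi>' \<and> (\<forall>(S1, b)\<in>exits (dec \<pi>). sub \<pi> b [] \<noteq> None \<and> sub \<pi>' b [] \<noteq> None \<and>
     seq_at (sub \<pi> b) [] = seq_at (sub \<pi>' b) [] \<and> sim (n - 1) (sub \<pi> b) (sub \<pi>' b))"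
proof -
  have r: "dec \<pi> = dec \<pi>' \<and> (\<forall>(S1, b)\<in>exits (dec \<pi>). sim (n - 1) (sub \<pi> b) (sub \<pi>' b))"
    using rep_sim[OF dec_rep[OF ip] inf_wf[OF ip] n dec_rep[OF ip'] inf_wf[OF ip'] e] .
  have v: "\<forall>(S1, b)\<in>exits (dec \<pi>). is_inf_proof (sub \<pi> b) \<and> concl (sub \<pi> b) = S1"
    using rep_valid[OF dec_rep[OF ip] ip] by blast
  have v': "\<forall>(S1, b)\<in>exits (dec \<pi>). is_inf_proof (sub \<pi>' b) \<and> concl (sub \<pi>' b) = S1"
    using rep_valid[OF dec_rep[OF ip'] ip'] r by auto
  have "sub \<pi> b [] \<noteq> None \<and> sub \<pi>' b [] \<noteq> None \<and>
     seq_at (sub \<pi> b) [] = seq_at (sub \<pi>' b) [] \<and> sim (n - 1) (sub \<pi> b) (sub \<pi>' b)"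
    if b: "(S1, b) \<in> exits (dec \<pi>)" for S1 b
  proof -
    have x: "is_inf_proof (sub \<pi> b)" "concl (sub \<pi> b) = S1" using v b by auto
    have y: "is_inf_proof (sub \<pi>' b)" "concl (sub \<pi>' b) = S1" using v' b by auto
    have z: "sim (n - 1) (sub \<pi> b) (sub \<pi>' b)" using r b by auto
    show ?thesis using x y z wf_root[OF inf_wf[OF x(1)]] wf_root[OF inf_wf[OF y(1)]]
      by (simp add: concl_def)
  qed
  then show ?thesis using r by blast
qed

lemma ure_frag:
  assumes n: "n > 0" and ip: "is_inf_proof \<pi>" "is_inf_proof \<pi>'" "is_inf_proof \<tau>" "is_inf_proof \<tau>'"
    and e1: "fragment n \<pi> = fragment n \<pi>'" and e2: "fragment n \<tau> = fragment n \<tau>'"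
  shows "fragment n (ure p \<pi> \<tau>) = fragment n (ure p \<pi>' \<tau>')"
proof -
  have c1: "concl \<pi> = concl \<pi>'" using frag_concl[OF n] ip e1 inf_wf by blast
  have c2: "concl \<tau> = concl \<tau>'" using frag_concl[OF n] ip e2 inf_wf by blast
  have cc: "cnd p \<pi> \<tau> = cnd p \<pi>' \<tau>'" using c1 c2 ip by (simp add: cnd_def)
  show ?thesis
  proof (cases "cnd p \<pi> \<tau>")
    case False then show ?thesis using cc by (simp add: ure_def)
  next
    case True
    note s1 = exit_side[OF ip(1,2) n e1] and s2 = exit_side[OF ip(3,4) n e2]
    have dd: "DD p \<pi> \<tau> = DD p \<pi>' \<tau>'" using s1 s2 by (simp add: DD_def)
    have ex: "\<forall>(S1, x)\<in>exits (DD p \<pi> \<tau>). Rp \<pi> \<tau> x [] \<noteq> None \<and> Rp \<pi>' \<tau>' x [] \<noteq> None \<and>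
        seq_at (Rp \<pi> \<tau> x) [] = seq_at (Rp \<pi>' \<tau>' x) [] \<and> sim (n - 1) (Rp \<pi> \<tau> x) (Rp \<pi>' \<tau>' x)"
    proof (clarify)
      fix S1 x assume "(S1, x) \<in> exits (DD p \<pi> \<tau>)"
      then have "(\<exists>b. x = Inl b \<and> (S1, b) \<in> exits (dec \<pi>)) \<or> (\<exists>b. x = Inr b \<and> (S1, b) \<in> exits (dec \<tau>))"
        using DD_exits[OF True] by blast
      then show "Rp \<pi> \<tau> x [] \<noteq> None \<and> Rp \<pi>' \<tau>' x [] \<noteq> None \<and>
        seq_at (Rp \<pi> \<tau> x) [] = seq_at (Rp \<pi>' \<tau>' x) [] \<and> sim (n - 1) (Rp \<pi> \<tau> x) (Rp \<pi>' \<tau>' x)"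
      proof
        assume "\<exists>b. x = Inl b \<and> (S1, b) \<in> exits (dec \<pi>)"
        then obtain b where b: "x = Inl b" "(S1, b) \<in> exits (dec \<pi>)" by blast
        then show ?thesis using s1 by (auto simp: Rp_def)
      next
        assume "\<exists>b. x = Inr b \<and> (S1, b) \<in> exits (dec \<tau>)"
        then obtain b where b: "x = Inr b" "(S1, b) \<in> exits (dec \<tau>)" by blast
        then show ?thesis using s2 by (auto simp: Rp_def)
      qed
    qed
    have "fragment n (compose (DD p \<pi> \<tau>) (Rp \<pi> \<tau>)) = fragment n (compose (DD p \<pi> \<tau>) (Rp \<pi>' \<tau>'))"
      using compose_frag[OF n ex] .
    then show ?thesis using True cc dd by (simp add: ure_def)
  qed
qed

lemma ure_cfn:
  assumes n: "n > 0" and ip: "is_inf_proof \<pi>" "is_inf_proof \<tau>" and c: "cfn n \<pi>" "cfn n \<tau>"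
  shows "cfn n (ure p \<pi> \<tau>)"
proof (cases "cnd p \<pi> \<tau>")
  case False then show ?thesis by (simp add: ure_def botT_cfn)
next
  case True
  note r1 = rep_cfn[OF dec_rep[OF ip(1)] inf_wf[OF ip(1)] n c(1)]
  note r2 = rep_cfn[OF dec_rep[OF ip(2)] inf_wf[OF ip(2)] n c(2)]
  have cf: "cutfree (DD p \<pi> \<tau>)" using DD_good[OF True] r1 r2 by blast
  have ex: "\<forall>(S1, x)\<in>exits (DD p \<pi> \<tau>). cfn (n - 1) (Rp \<pi> \<tau> x)"
  proof (clarify)
    fix S1 x assume "(S1, x) \<in> exits (DD p \<pi> \<tau>)"
    then have "(\<exists>b. x = Inl b \<and> (S1, b) \<in> exits (dec \<pi>)) \<or> (\<exists>b. x = Inr b \<and> (S1, b) \<in> exits (dec \<tau>))"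
      using DD_exits[OF True] by blast
    then show "cfn (n - 1) (Rp \<pi> \<tau> x)" using r1 r2 by (auto simp: Rp_def)
  qed
  show ?thesis using compose_cfn[OF n cf ex] True by (simp add: ure_def)
qed

theorem lemma6p2:
  fixes p :: 'a
  shows "\<exists>u :: 'a ptree \<Rightarrow> 'a ptree \<Rightarrow> 'a ptree. removing (FAt p) u \<and> adequate u"
proof (intro exI[of _ "ure p"] conjI)
  have mp: "maps_into_PP (ure p)" unfolding maps_into_PP_def
  proof (intro ballI)
    fix \<pi> \<tau> :: "'a ptree" assume "\<pi> \<in> PP" "\<tau> \<in> PP"
    then show "ure p \<pi> \<tau> \<in> PP" using ure_PP[of \<pi> \<tau> p] by (simp add: PP_def)
  qed
  have ne: "non_expansive (ure p)"
    unfolding non_expansive_def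
  proof (intro allI ballI impI)
    fix n and \<pi> \<pi>' \<tau> \<tau>' :: "'a ptree"
    assume a: "\<pi> \<in> PP" "\<pi>' \<in> PP" "\<tau> \<in> PP" "\<tau>' \<in> PP" "sim n \<pi> \<pi>'" "sim n \<tau> \<tau>'"
    show "sim n (ure p \<pi> \<tau>) (ure p \<pi>' \<tau>')"
    proof (cases "n = 0")
      case True then show ?thesis by (simp add: sim_def)
    next
      case False
      then have "fragment n (ure p \<pi> \<tau>) = fragment n (ure p \<pi>' \<tau>')"
        using ure_frag[of n \<pi> \<pi>' \<tau> \<tau>' p] a by (simp add: PP_def sim_def)
      then show ?thesis by (simp add: sim_def)
    qed
  qed
  have cp: "\<forall>\<pi> \<tau> S. cut_pair (FAt p) \<pi> \<tau> S \<longrightarrow> ure p \<pi> \<tau> \<in> PP \<and> concl (ure p \<pi> \<tau>) = S"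
  proof (intro allI impI)
    fix \<pi> \<tau> S assume a: "cut_pair (FAt p) \<pi> \<tau> S"
    then have ip: "is_inf_proof \<pi>" "is_inf_proof \<tau>" by (auto simp: cut_pair_def PP_def)
    have cs: "concl \<pi> = (fst S, add_mset (FAt p) (snd S))" "concl \<tau> = (add_mset (FAt p) (fst S), snd S)"
      using a by (auto simp: cut_pair_def)
    have c: "cnd p \<pi> \<tau>" using cs ip by (simp add: cnd_def)
    have u: "is_inf_proof (ure p \<pi> \<tau>)" "concl (ure p \<pi> \<tau>) = (fst (concl \<pi>), snd (concl \<pi>) - {#FAt p#})"
      using ure_PP[OF ip, of p] c by auto
    show "ure p \<pi> \<tau> \<in> PP \<and> concl (ure p \<pi> \<tau>) = S"
      using u cs by (simp add: PP_def)
  qed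
  show "removing (FAt p) (ure p)" unfolding removing_def using mp ne cp by blast
  show "adequate (ure p)" unfolding adequate_def
  proof (intro allI impI)
    fix n and \<pi> \<tau> :: "'a ptree" assume a: "\<pi> \<in> PPn n" "\<tau> \<in> PPn n"
    then have ip: "is_inf_proof \<pi>" "is_inf_proof \<tau>" and c: "cfn n \<pi>" "cfn n \<tau>"
      by (auto simp: PPn_cfn PP_def)
    have "is_inf_proof (ure p \<pi> \<tau>)" using ure_PP[OF ip, of p] by simp
    moreover have "cfn n (ure p \<pi> \<tau>)"
    proof (cases "n = 0")
      case True then show ?thesis by (simp add: cfn0)
    next
      case False then show ?thesis using ure_cfn[OF _ ip c, of p] by simp
    qed
    ultimately show "ure p \<pi> \<tau> \<in> PPn n" by (simp add: PPn_cfn PP_def)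
  qed
qed

end
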